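(* Let $\mathscr{K}$ be a finite simplicial complex and let $f,g:\mathscr{K}\to\mathbb{R}$ be piecewise linear functions inducing filtrations on $\mathscr{K}$. Let $\mathrm{EDg}_1$ and $\mathrm{EDg}_2$ be the extended persistence diagrams of $f$ and $g$, respectively, and let $\lambda(\mathcal{G}_1)$ and $\lambda(\mathcal{G}_2)$ be their extended persistence landscapes. Then $$\Lambda_\infty(\mathrm{EDg}_1,\mathrm{EDg}_2)\;\le\; d_B(\mathrm{EDg}_1,\mathrm{EDg}_2)\;\le\;\lVert f-g\rVert_\infty ,$$ where $\Lambda_\infty(\mathrm{EDg}_1,\mathrm{EDg}_2)=\lVert \lambda(\mathcal{G}_1)-\lambda(\mathcal{G}_2)\rVert_\infty$ is the $\infty$-landscape distance and $d_B$ is the bottleneck distance.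
   Context: Extended persistence: for a function $f$ on $\mathscr{K}$ one considers the sublevel-set filtration ($f^{-1}(-\infty,\alpha]$, increasing $\alpha$) followed by the superlevel-set filtration ($f^{-1}[\alpha,\infty)$, decreasing $\alpha$, taken in relative homology). The extended persistence diagram $\mathrm{EDg}$ is the finite multiset of points $(b_i,d_i)\in\mathbb{R}^2$ recording the filtration values at which each topological feature is born ($b_i$) and dies ($d_i$) in this extended filtration; all points have finite coordinates, and it may happen that $d_i<b_i$. Decompose $\mathrm{EDg}=\mathrm{EDg}^+\cup\mathrm{EDg}^-$, where $\mathrm{EDg}^+$ contains the points with $b_i<d_i$ and $\mathrm{EDg}^-$ those with $d_i<b_i$. For each $(b_i,d_i)\in\mathrm{EDg}$, the generating function $\Lambda_i:\mathbb{R}\to\mathbb{R}$ is the piecewise linear function consisting of the two line segments from $(b_i,0)$ and from $(d_i,0)$ to the common point $\big(\tfrac{b_i+d_i}{2},\tfrac{d_i-b_i}{2}\big)$, and equal to $0$ outside the interval between $b_i$ and $d_i$ (so it is nonnegative for points of $\mathrm{EDg}^+$ and nonpositive for points of $\mathrm{EDg}^-$). The extended persistence landscape of $\mathrm{EDg}$ is $\lambda(\mathcal{G})=\{\lambda_k(\mathcal{G})\}_{k\ge1}\cup\{\lambda_{-j}(\mathcal{G})\}_{j\ge1}$, where $\lambda_k(\mathcal{G})(t)$ is the $k$-th largest value of $\{\Lambda_i(t):(b_i,d_i)\in\mathrm{EDg}^+\}$ and $\lambda_{-j}(\mathcal{G})(t)$ is the $j$-th smallest value of $\{\Lambda_i(t):(b_i,d_i)\in\mathrm{EDg}^-\}$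 (taken to be $0$ when there are fewer than $k$, resp. $j$, such values). For $1\le p\le\infty$, the $p$-landscape distance between two diagrams is $\Lambda_p(\mathrm{EDg}_1,\mathrm{EDg}_2)=\lVert\lambda(\mathcal{G}_1)-\lambda(\mathcal{G}_2)\rVert_p$, the $\ell_p$-norm of the difference of the landscape families (for $p=\infty$, the supremum over all indices and all $t\in\mathbb{R}$ of the absolute difference of corresponding landscape functions). The bottleneck distance $d_B$ is the infimum over partial matchings between the diagrams (unmatched points matched to the diagonal) of the largest $\ell_\infty$-displacement of a matched point. *)

theory Defs
  imports Complex_Main "HOL-Library.Multiset"
begin

definition simplicial_complex :: "'v set set \<Rightarrow> bool" where
  "simplicial_complex K \<longleftrightarrow> finite K \<and> (\<forall>\<sigma>\<in>K. \<sigma> \<noteq> {} \<and> finite \<sigma>) \<and>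
     (\<forall>\<sigma>\<in>K. \<forall>\<tau>. \<tau> \<subseteq> \<sigma> \<and> \<tau> \<noteq> {} \<longrightarrow> \<tau> \<in> K)"

text \<open>A chain over GF(2) is a finite set of simplices; addition is symmetric difference.\<close>

definition sdiff :: "'a set \<Rightarrow> 'a set \<Rightarrow> 'a set" where
  "sdiff a b = (a - b) \<union> (b - a)"

definition simps :: "'v set set \<Rightarrow> nat \<Rightarrow> 'v set set" where
  "simps A p = {\<sigma> \<in> A. card \<sigma> = Suc p}"

definition chains :: "'v set set \<Rightarrow> nat \<Rightarrow> 'v set set set" where
  "chains A p = Pow (simps A p)"

definition boundary :: "'v set set \<Rightarrow> 'v set set" where
  "boundary c = {\<tau>. \<tau> \<noteq> {} \<and> odd (card {\<sigma> \<in> c. \<tau> \<subseteq> \<sigma> \<and> card \<sigma> = Suc (card \<tau>)})}"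

definition ssum :: "'a set set \<Rightarrow> 'a set set \<Rightarrow> 'a set set" where
  "ssum U W = {sdiff u w | u w. u \<in> U \<and> w \<in> W}"

definition relcycles :: "'v set set \<Rightarrow> 'v set set \<Rightarrow> nat \<Rightarrow> 'v set set set" where
  "relcycles A B p = {c \<in> chains A p. boundary c \<subseteq> B}"

text \<open>Chains that are zero in H_p(A',B'): C_p(B') + boundary of C_{p+1}(A').\<close>
definition nullchains :: "'v set set \<Rightarrow> 'v set set \<Rightarrow> nat \<Rightarrow> 'v set set set" where
  "nullchains A' B' p = ssum (chains B' p) (boundary ` chains A' (Suc p))"

definition gf2dim :: "'a set \<Rightarrow> nat" where
  "gf2dim S = (LEAST k. card S \<le> 2 ^ k)"

text \<open>Rank of the map H_p(A,B) \<rightarrow> H_p(A',B') induced by inclusion of pairs.\<close>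
definition hrank :: "'v set set \<Rightarrow> 'v set set \<Rightarrow> 'v set set \<Rightarrow> 'v set set \<Rightarrow> nat \<Rightarrow> nat" where
  "hrank A B A' B' p =
     gf2dim (ssum (relcycles A B p) (nullchains A' B' p)) - gf2dim (nullchains A' B' p)"

definition critvals :: "'v set set \<Rightarrow> ('v \<Rightarrow> real) \<Rightarrow> real list" where
  "critvals K f = sorted_list_of_set (f ` \<Union>K)"

text \<open>Index k = 0: empty; k = 1..n: sublevel complex at the k-th critical value;
  k = n+1..2n: pair (K, superlevel complex at critical value number 2n+1-k).\<close>
definition ext_space :: "'v set set \<Rightarrow> ('v \<Rightarrow> real) \<Rightarrow> nat \<Rightarrow> 'v set set \<times> 'v set set" where
  "ext_space K f k = (let cs = critvals K f; n = length cs in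
     if k = 0 then ({}, {})
     else if k \<le> n then ({\<sigma> \<in> K. \<forall>v\<in>\<sigma>. f v \<le> cs ! (k - 1)}, {})
     else (K, {\<sigma> \<in> K. \<forall>v\<in>\<sigma>. cs ! (2 * n - k) \<le> f v}))"

definition ext_val :: "'v set set \<Rightarrow> ('v \<Rightarrow> real) \<Rightarrow> nat \<Rightarrow> real" where
  "ext_val K f k = (let cs = critvals K f; n = length cs in
     if k \<le> n then cs ! (k - 1) else cs ! (2 * n - k))"

definition ext_rank :: "'v set set \<Rightarrow> ('v \<Rightarrow> real) \<Rightarrow> nat \<Rightarrow> nat \<Rightarrow> nat \<Rightarrow> int" where
  "ext_rank K f p a b = int (hrank (fst (ext_space K f a)) (snd (ext_space K f a))
                                  (fst (ext_space K f b)) (snd (ext_space K f b)) p)"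

text \<open>Multiplicity of the interval of indices [k, j-1] (born at k, dies at j).\<close>
definition ext_mult :: "'v set set \<Rightarrow> ('v \<Rightarrow> real) \<Rightarrow> nat \<Rightarrow> nat \<Rightarrow> nat \<Rightarrow> int" where
  "ext_mult K f p k j = ext_rank K f p k (j - 1) - ext_rank K f p (k - 1) (j - 1)
                        - ext_rank K f p k j + ext_rank K f p (k - 1) j"

definition EDg :: "'v set set \<Rightarrow> ('v \<Rightarrow> real) \<Rightarrow> nat \<Rightarrow> (real \<times> real) multiset" where
  "EDg K f p = (let n = length (critvals K f) in
     (\<Sum>k\<in>{1..2*n}. \<Sum>j\<in>{k<..2*n}.
        if ext_val K f k \<noteq> ext_val K f j
        then replicate_mset (nat (ext_mult K f p k j)) (ext_val K f k, ext_val K f j)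
        else {#}))"

definition tent :: "real \<times> real \<Rightarrow> real \<Rightarrow> real" where
  "tent bd t = (case bd of (b, d) \<Rightarrow>
     if b \<le> d then max 0 (min (t - b) (d - t)) else - max 0 (min (t - d) (b - t)))"

definition land_pos :: "(real \<times> real) multiset \<Rightarrow> nat \<Rightarrow> real \<Rightarrow> real" where
  "land_pos D k t = (let xs = rev (sorted_list_of_multiset
       (image_mset (\<lambda>q. tent q t) (filter_mset (\<lambda>(b, d). b < d) D)))
     in if 1 \<le> k \<and> k \<le> length xs then xs ! (k - 1) else 0)"

definition land_neg :: "(real \<times> real) multiset \<Rightarrow> nat \<Rightarrow> real \<Rightarrow> real" where
  "land_neg D j t = (let xs = sorted_list_of_multiset
       (image_mset (\<lambda>q. tent q t) (filter_mset (\<lambda>(b, d). d < b) D))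
     in if 1 \<le> j \<and> j \<le> length xs then xs ! (j - 1) else 0)"

definition landscape_dist_inf :: "(real \<times> real) multiset \<Rightarrow> (real \<times> real) multiset \<Rightarrow> real" where
  "landscape_dist_inf D1 D2 =
     Sup ({\<bar>land_pos D1 k t - land_pos D2 k t\<bar> | k t. 1 \<le> k} \<union>
          {\<bar>land_neg D1 j t - land_neg D2 j t\<bar> | j t. 1 \<le> j})"

definition linf_dist :: "real \<times> real \<Rightarrow> real \<times> real \<Rightarrow> real" where
  "linf_dist x y = max \<bar>fst x - fst y\<bar> \<bar>snd x - snd y\<bar>"

definition diag_dist :: "real \<times> real \<Rightarrow> real" where
  "diag_dist x = \<bar>snd x - fst x\<bar> / 2"

definition is_partial_matching ::
  "(real \<times> real) multiset \<Rightarrow> (real \<times> real) multiset \<Rightarrow> ((real \<times> real) \<times> (real \<times> real)) multiset \<Rightarrow> bool" where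
  "is_partial_matching D1 D2 M \<longleftrightarrow> image_mset fst M \<subseteq># D1 \<and> image_mset snd M \<subseteq># D2"

definition matching_cost ::
  "(real \<times> real) multiset \<Rightarrow> (real \<times> real) multiset \<Rightarrow> ((real \<times> real) \<times> (real \<times> real)) multiset \<Rightarrow> real" where
  "matching_cost D1 D2 M = Max (insert 0
     ((\<lambda>(x, y). linf_dist x y) ` set_mset M \<union>
      diag_dist ` set_mset (D1 - image_mset fst M) \<union>
      diag_dist ` set_mset (D2 - image_mset snd M)))"

definition bottleneck :: "(real \<times> real) multiset \<Rightarrow> (real \<times> real) multiset \<Rightarrow> real" where
  "bottleneck D1 D2 = Inf {matching_cost D1 D2 M | M. is_partial_matching D1 D2 M}"

end

theory Submission
  imports Defs
begin

definition subsp :: "'a set set \<Rightarrow> bool" where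
  "subsp S \<longleftrightarrow> {} \<in> S \<and> (\<forall>x\<in>S. \<forall>y\<in>S. sdiff x y \<in> S)"

lemma sdiff_comm: "sdiff x y = sdiff y x" by (auto simp: sdiff_def)
lemma sdiff_assoc: "sdiff (sdiff x y) z = sdiff x (sdiff y z)" by (auto simp: sdiff_def)
lemma sdiff_self[simp]: "sdiff x x = {}" by (auto simp: sdiff_def)
lemma sdiff_empty[simp]: "sdiff x {} = x" "sdiff {} x = x" by (auto simp: sdiff_def)
lemma sdiff_cancel[simp]: "sdiff x (sdiff x y) = y" by (auto simp: sdiff_def)
lemma sdiff_cancel2[simp]: "sdiff (sdiff x y) y = x" by (auto simp: sdiff_def)
lemma sdiff_inj: "sdiff s x = sdiff s y \<Longrightarrow> x = y" by (metis sdiff_cancel)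

lemma subsp_sdiff: "subsp S \<Longrightarrow> x \<in> S \<Longrightarrow> y \<in> S \<Longrightarrow> sdiff x y \<in> S"
  by (auto simp: subsp_def)
lemma subsp_empty: "subsp S \<Longrightarrow> {} \<in> S" by (auto simp: subsp_def)

lemma card_pow2:
  assumes "finite T" shows "subsp S \<Longrightarrow> S \<subseteq> Pow T \<Longrightarrow> \<exists>d. card S = 2 ^ d"
  using assms
proof (induction T arbitrary: S rule: finite_induct)
  case empty
  then have "S = {{}}" by (auto simp: subsp_def)
  then show ?case by (intro exI[of _ 0]) simp
next
  case (insert a T)
  define S' where "S' = {x\<in>S. a \<notin> x}"
  have sub': "subsp S'" unfolding subsp_def
  proof (intro conjI ballI)
    show "{} \<in> S'" using insert.prems by (simp add: S'_def subsp_empty)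
    fix x y assume "x \<in> S'" "y \<in> S'"
    then show "sdiff x y \<in> S'" using insert.prems(1) unfolding S'_def
      by (simp add: subsp_sdiff) (simp add: sdiff_def)
  qed
  have "S' \<subseteq> Pow T" using insert.prems unfolding S'_def by auto
  then obtain d where d: "card S' = 2 ^ d" using insert.IH sub' by blast
  have finS': "finite S'" using \<open>S' \<subseteq> Pow T\<close> \<open>finite T\<close> by (meson finite_Pow_iff finite_subset)
  show ?case
  proof (cases "\<exists>s\<in>S. a \<in> s")
    case False
    then have "S = S'" unfolding S'_def by auto
    then show ?thesis using d by auto
  next
    case True
    then obtain s where s: "s \<in> S" "a \<in> s" by blast
    have "S = S' \<union> sdiff s ` S'"
    proof
      show "S \<subseteq> S' \<union> sdiff s ` S'"
      proof
        fix x assume x: "x \<in> S"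
        show "x \<in> S' \<union> sdiff s ` S'"
        proof (cases "a \<in> x")
          case True
          have "sdiff s x \<in> S'" using x s True insert.prems(1) unfolding S'_def
            by (simp add: subsp_sdiff) (simp add: sdiff_def)
          moreover have "x = sdiff s (sdiff s x)" by simp
          ultimately show ?thesis by blast
        qed (use x in \<open>auto simp: S'_def\<close>)
      qed
      show "S' \<union> sdiff s ` S' \<subseteq> S" using s insert.prems(1) unfolding S'_def
        by (auto intro: subsp_sdiff)
    qed
    moreover have "S' \<inter> sdiff s ` S' = {}"
    proof -
      have "a \<in> sdiff s y" if "a \<notin> y" for y using s(2) that by (simp add: sdiff_def)
      then show ?thesis unfolding S'_def by auto
    qed
    moreover have "card (sdiff s ` S') = card S'"
      by (rule card_image) (meson inj_onI sdiff_inj)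
    ultimately have "card S = 2 * card S'" using finS'
      by (simp add: card_Un_disjoint)
    then show ?thesis using d by (intro exI[of _ "Suc d"]) simp
  qed
qed

lemma gf2dim_pow: "card S = 2 ^ d \<Longrightarrow> gf2dim S = d"
  unfolding gf2dim_def
proof (rule Least_equality)
  assume "card S = 2 ^ d" then show "card S \<le> 2 ^ d" by simp
next
  fix y assume "card S = 2 ^ d" "card S \<le> 2 ^ y"
  then have "(2::nat) ^ d \<le> 2 ^ y" by simp
  then show "d \<le> y" by (rule power_le_imp_le_exp[rotated]) simp
qed

lemma ssum_mem: "u \<in> U \<Longrightarrow> w \<in> W \<Longrightarrow> sdiff u w \<in> ssum U W"
  unfolding ssum_def by blast
lemma ssum_memE: "x \<in> ssum U W \<Longrightarrow> (\<And>u w. x = sdiff u w \<Longrightarrow> u \<in> U \<Longrightarrow> w \<in> W \<Longrightarrow> P) \<Longrightarrow> P"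
  unfolding ssum_def by blast

lemma ssum_subsp: assumes "subsp U" "subsp W" shows "subsp (ssum U W)"
  unfolding subsp_def
proof (intro conjI ballI)
  have "sdiff {} {} \<in> ssum U W" using assms by (intro ssum_mem) (auto simp: subsp_empty)
  then show "{} \<in> ssum U W" by simp
  fix x y assume "x \<in> ssum U W" "y \<in> ssum U W"
  then obtain u w u' w' where h: "x = sdiff u w" "u \<in> U" "w \<in> W" "y = sdiff u' w'" "u' \<in> U" "w' \<in> W"
    by (metis ssum_memE)
  have "sdiff x y = sdiff (sdiff u u') (sdiff w w')"
    unfolding h by (auto simp: sdiff_def)
  then show "sdiff x y \<in> ssum U W" using assms h by (simp add: ssum_mem subsp_sdiff)
qed

lemma inter_subsp: "subsp U \<Longrightarrow> subsp W \<Longrightarrow> subsp (U \<inter> W)"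
  unfolding subsp_def by auto

lemma ssum_sup1: "subsp W \<Longrightarrow> U \<subseteq> ssum U W"
proof
  fix x assume "subsp W" "x \<in> U"
  then have "sdiff x {} \<in> ssum U W" by (intro ssum_mem) (auto simp: subsp_empty)
  then show "x \<in> ssum U W" by simp
qed
lemma ssum_sup2: "subsp U \<Longrightarrow> W \<subseteq> ssum U W"
proof
  fix x assume "subsp U" "x \<in> W"
  then have "sdiff {} x \<in> ssum U W" by (intro ssum_mem) (auto simp: subsp_empty)
  then show "x \<in> ssum U W" by simp
qed
lemma ssum_least: "subsp X \<Longrightarrow> U \<subseteq> X \<Longrightarrow> W \<subseteq> X \<Longrightarrow> ssum U W \<subseteq> X"
  by (auto elim!: ssum_memE intro: subsp_sdiff)
lemma ssum_mono: "U \<subseteq> U' \<Longrightarrow> W \<subseteq> W' \<Longrightarrow> ssum U W \<subseteq> ssum U' W'"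
  by (auto elim!: ssum_memE intro: ssum_mem)

lemma finite_ssum: "finite U \<Longrightarrow> finite W \<Longrightarrow> finite (ssum U W)"
proof -
  assume "finite U" "finite W"
  have "ssum U W = (\<lambda>(u,w). sdiff u w) ` (U \<times> W)" unfolding ssum_def by auto
  then show ?thesis using \<open>finite U\<close> \<open>finite W\<close> by simp
qed

lemma card_ssum_inter:
  assumes U: "subsp U" "finite U" and W: "subsp W" "finite W"
  shows "card (ssum U W) * card (U \<inter> W) = card U * card W"
proof -
  define \<phi> where "\<phi> = (\<lambda>(u::'a set, w). sdiff u w)"
  have fib: "card {p \<in> U \<times> W. \<phi> p = s} = card (U \<inter> W)" if s: "s \<in> ssum U W" for s
  proof -
    from s obtain u0 w0 where uw: "s = sdiff u0 w0" "u0 \<in> U" "w0 \<in> W" unfolding ssum_def by auto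
    have "{p \<in> U \<times> W. \<phi> p = s} = (\<lambda>x. (sdiff u0 x, sdiff w0 x)) ` (U \<inter> W)"
    proof
      show "{p \<in> U \<times> W. \<phi> p = s} \<subseteq> (\<lambda>x. (sdiff u0 x, sdiff w0 x)) ` (U \<inter> W)"
      proof
        fix p assume p: "p \<in> {p \<in> U \<times> W. \<phi> p = s}"
        then obtain u w where pw: "p = (u, w)" "u \<in> U" "w \<in> W" "sdiff u w = sdiff u0 w0"
          using uw unfolding \<phi>_def by auto
        define x where "x = sdiff u0 u"
        have "x = sdiff w0 w" using pw(4) unfolding x_def sdiff_def by blast
        have "x \<in> U" unfolding x_def using pw uw U by (simp add: subsp_sdiff)
        moreover have "x \<in> W" unfolding \<open>x = sdiff w0 w\<close> using pw uw W by (simp add: subsp_sdiff)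
        ultimately have "x \<in> U \<inter> W" by blast
        moreover have "sdiff u0 x = u" by (simp add: x_def)
        moreover have "sdiff w0 x = w" by (simp add: \<open>x = sdiff w0 w\<close>)
        ultimately have "x \<in> U \<inter> W \<and> p = (sdiff u0 x, sdiff w0 x)" using pw by simp
        then show "p \<in> (\<lambda>x. (sdiff u0 x, sdiff w0 x)) ` (U \<inter> W)" by blast
      qed
    next
      show "(\<lambda>x. (sdiff u0 x, sdiff w0 x)) ` (U \<inter> W) \<subseteq> {p \<in> U \<times> W. \<phi> p = s}"
        using uw U W unfolding \<phi>_def subsp_def by (auto simp: sdiff_def)
    qed
    moreover have "inj_on (\<lambda>x. (sdiff u0 x, sdiff w0 x)) (U \<inter> W)"
      by (rule inj_onI) (auto dest: sdiff_inj)
    ultimately show ?thesis by (simp add: card_image)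
  qed
  have "U \<times> W = (\<Union>s\<in>ssum U W. {p \<in> U \<times> W. \<phi> p = s})"
    unfolding ssum_def \<phi>_def by auto
  moreover have "card (\<Union>s\<in>ssum U W. {p \<in> U \<times> W. \<phi> p = s}) = (\<Sum>s\<in>ssum U W. card {p \<in> U \<times> W. \<phi> p = s})"
    by (rule card_UN_disjoint) (auto simp: U(2) W(2) finite_ssum)
  ultimately have "card (U \<times> W) = (\<Sum>s\<in>ssum U W. card {p \<in> U \<times> W. \<phi> p = s})"
    by simp
  also have "\<dots> = (\<Sum>s\<in>ssum U W. card (U \<inter> W))" using fib by simp
  finally show ?thesis by (simp add: card_cartesian_product)
qed


definition fsub :: "'a set set \<Rightarrow> bool" where
  "fsub S \<longleftrightarrow> subsp S \<and> finite S \<and> (\<forall>x\<in>S. finite x)"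

lemma fsub_card: assumes "fsub S" shows "card S = 2 ^ gf2dim S"
proof -
  have "finite (\<Union>S)" using assms unfolding fsub_def by auto
  moreover have "S \<subseteq> Pow (\<Union>S)" by auto
  moreover have "subsp S" using assms unfolding fsub_def by simp
  ultimately obtain d where "card S = 2 ^ d" using card_pow2 by blast
  then show ?thesis by (simp add: gf2dim_pow)
qed

lemma fsub_ssum: assumes "fsub U" "fsub W" shows "fsub (ssum U W)"
proof -
  have "finite x" if "x \<in> ssum U W" for x
  proof -
    obtain u w where "x = sdiff u w" "u \<in> U" "w \<in> W" using \<open>x \<in> ssum U W\<close> by (rule ssum_memE)
    then show ?thesis using assms unfolding fsub_def sdiff_def by blast
  qed
  moreover have "subsp (ssum U W)" using assms ssum_subsp unfolding fsub_def by blast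
  moreover have "finite (ssum U W)" using assms finite_ssum unfolding fsub_def by blast
  ultimately show ?thesis unfolding fsub_def by blast
qed

lemma fsub_inter: "fsub U \<Longrightarrow> fsub W \<Longrightarrow> fsub (U \<inter> W)"
  unfolding fsub_def using inter_subsp by blast

lemma dim_formula: assumes "fsub U" "fsub W"
  shows "gf2dim (ssum U W) + gf2dim (U \<inter> W) = gf2dim U + gf2dim W"
proof -
  have "card (ssum U W) * card (U \<inter> W) = card U * card W"
    using assms card_ssum_inter unfolding fsub_def by blast
  then have "(2::nat) ^ (gf2dim (ssum U W) + gf2dim (U \<inter> W)) = 2 ^ (gf2dim U + gf2dim W)"
    using fsub_card[OF assms(1)] fsub_card[OF assms(2)] fsub_card[OF fsub_ssum[OF assms]]
      fsub_card[OF fsub_inter[OF assms]] by (simp add: power_add)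
  then show ?thesis by simp
qed

lemma dim_mono: assumes "fsub U" "fsub W" "U \<subseteq> W" shows "gf2dim U \<le> gf2dim W"
proof -
  have "card U \<le> card W" using assms card_mono unfolding fsub_def by blast
  then have "(2::nat) ^ gf2dim U \<le> 2 ^ gf2dim W" using fsub_card assms by metis
  then show ?thesis by (rule power_le_imp_le_exp[rotated]) simp
qed

lemma key_ineq: assumes "fsub X" "fsub Y" "fsub W" "X \<subseteq> Y"
  shows "int (gf2dim (ssum Y W)) - int (gf2dim (ssum X W)) \<le> int (gf2dim Y) - int (gf2dim X)"
proof -
  have 1: "gf2dim (ssum Y W) + gf2dim (Y \<inter> W) = gf2dim Y + gf2dim W" using dim_formula assms by blast
  have 2: "gf2dim (ssum X W) + gf2dim (X \<inter> W) = gf2dim X + gf2dim W" using dim_formula assms by blast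
  have 3: "gf2dim (X \<inter> W) \<le> gf2dim (Y \<inter> W)"
    using dim_mono fsub_inter assms by (metis inf_mono order_refl)
  show ?thesis using 1 2 3 by linarith
qed

lemma card_sdiff_parity:
  assumes "finite A" "finite B"
  shows "odd (card (sdiff A B)) \<longleftrightarrow> (odd (card A) \<noteq> odd (card B))"
proof -
  have "card (sdiff A B) = card (A - B) + card (B - A)"
    unfolding sdiff_def using assms by (intro card_Un_disjoint) auto
  moreover have "card A = card (A - B) + card (A \<inter> B)"
    using assms by (metis card_Diff_subset_Int Int_lower1 card_mono le_add_diff_inverse2 finite_Int
      Diff_Diff_Int card_Diff_subset finite_Diff inf_commute)
  moreover have "card B = card (B - A) + card (A \<inter> B)"
    using assms by (metis card_Diff_subset_Int Int_lower1 card_mono le_add_diff_inverse2 finite_Int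
      Diff_Diff_Int card_Diff_subset finite_Diff inf_commute)
  ultimately show ?thesis by auto
qed

lemma boundary_sdiff:
  fixes c c' :: "'a set set"
  assumes "finite c" "finite c'"
  shows "boundary (sdiff c c') = sdiff (boundary c) (boundary c')"
proof (rule set_eqI)
  fix \<tau> :: "'a set"
  define P where "P = (\<lambda>\<sigma>. \<tau> \<subseteq> \<sigma> \<and> card \<sigma> = Suc (card \<tau>))"
  have "{\<sigma> \<in> sdiff c c'. P \<sigma>} = sdiff {\<sigma> \<in> c. P \<sigma>} {\<sigma> \<in> c'. P \<sigma>}"
    unfolding sdiff_def by auto
  then have "odd (card {\<sigma> \<in> sdiff c c'. P \<sigma>}) \<longleftrightarrow>
     (odd (card {\<sigma> \<in> c. P \<sigma>}) \<noteq> odd (card {\<sigma> \<in> c'. P \<sigma>}))"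
    using card_sdiff_parity[of "{\<sigma> \<in> c. P \<sigma>}" "{\<sigma> \<in> c'. P \<sigma>}"] assms by simp
  moreover have "\<tau> \<in> boundary X \<longleftrightarrow> \<tau> \<noteq> {} \<and> odd (card {\<sigma> \<in> X. P \<sigma>})" for X
    unfolding boundary_def P_def by simp
  moreover have "\<tau> \<in> sdiff U V \<longleftrightarrow> (\<tau> \<in> U) \<noteq> (\<tau> \<in> V)" for U V :: "'a set set"
    unfolding sdiff_def by auto
  ultimately show "\<tau> \<in> boundary (sdiff c c') \<longleftrightarrow> \<tau> \<in> sdiff (boundary c) (boundary c')"
    by auto
qed

lemma card_Suc_finite: "card \<sigma> = Suc q \<Longrightarrow> finite \<sigma>"
  using card.infinite by fastforce

lemma boundary_empty[simp]: "boundary {} = {}"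
  unfolding boundary_def by simp

lemma finite_simps: "finite A \<Longrightarrow> finite (simps A p)"
  unfolding simps_def by simp

lemma fsub_chains: "finite A \<Longrightarrow> fsub (chains A p)"
  unfolding fsub_def subsp_def chains_def
  by (auto simp: sdiff_def finite_simps intro: finite_subset)

lemma chains_mono: "A \<subseteq> A' \<Longrightarrow> chains A p \<subseteq> chains A' p"
  unfolding chains_def simps_def by auto

lemma finite_chain: "finite A \<Longrightarrow> c \<in> chains A p \<Longrightarrow> finite c"
  unfolding chains_def using finite_simps finite_subset by blast

lemma fsub_relcycles: assumes "finite A" shows "fsub (relcycles A B p)"
proof -
  have "subsp (relcycles A B p)"
    unfolding subsp_def
  proof (intro conjI ballI)
    show "{} \<in> relcycles A B p" unfolding relcycles_def chains_def by simp
    fix x y assume "x \<in> relcycles A B p" "y \<in> relcycles A B p"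
    then have x: "x \<in> chains A p" "boundary x \<subseteq> B" and y: "y \<in> chains A p" "boundary y \<subseteq> B"
      unfolding relcycles_def by auto
    have "sdiff x y \<in> chains A p" using x y fsub_chains[OF assms] unfolding fsub_def
      by (simp add: subsp_sdiff)
    moreover have "boundary (sdiff x y) \<subseteq> B"
      using x y finite_chain[OF assms] by (simp add: boundary_sdiff) (auto simp: sdiff_def)
    ultimately show "sdiff x y \<in> relcycles A B p" unfolding relcycles_def by simp
  qed
  moreover have "relcycles A B p \<subseteq> chains A p" unfolding relcycles_def by auto
  ultimately show ?thesis using fsub_chains[OF assms, of p] unfolding fsub_def
    by (meson finite_subset subsetD)
qed

lemma finite_boundary:
  assumes "finite c" "\<forall>\<sigma>\<in>c. finite \<sigma>" shows "finite (boundary c)"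
proof -
  have "boundary c \<subseteq> (\<Union>\<sigma>\<in>c. Pow \<sigma>)"
  proof
    fix \<tau> assume "\<tau> \<in> boundary c"
    then have "odd (card {\<sigma> \<in> c. \<tau> \<subseteq> \<sigma> \<and> card \<sigma> = Suc (card \<tau>)})" unfolding boundary_def by simp
    then have "{\<sigma> \<in> c. \<tau> \<subseteq> \<sigma> \<and> card \<sigma> = Suc (card \<tau>)} \<noteq> {}" by (intro notI) simp
    then show "\<tau> \<in> (\<Union>\<sigma>\<in>c. Pow \<sigma>)" by auto
  qed
  then show ?thesis by (rule finite_subset) (use assms in auto)
qed

lemma fsub_image_boundary: assumes "finite A" shows "fsub (boundary ` chains A q)"
proof -
  have fc: "fsub (chains A q)" using fsub_chains[OF assms] .
  have elts: "\<forall>\<sigma>\<in>c. finite \<sigma>" if "c \<in> chains A q" for c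
    using that unfolding chains_def simps_def by (auto intro: card_Suc_finite)
  have "subsp (boundary ` chains A q)"
    unfolding subsp_def
  proof (intro conjI ballI)
    have "{} \<in> chains A q" using fc unfolding fsub_def by (simp add: subsp_empty)
    then have "boundary {} \<in> boundary ` chains A q" by (rule imageI)
    then show "{} \<in> boundary ` chains A q" by simp
    fix x y assume "x \<in> boundary ` chains A q" "y \<in> boundary ` chains A q"
    then obtain c c' where "x = boundary c" "y = boundary c'" "c \<in> chains A q" "c' \<in> chains A q" by blast
    moreover have "sdiff c c' \<in> chains A q" using fc calculation unfolding fsub_def by (simp add: subsp_sdiff)
    moreover have "sdiff x y = boundary (sdiff c c')"
      using calculation finite_chain[OF assms] by (simp add: boundary_sdiff)
    ultimately show "sdiff x y \<in> boundary ` chains A q" by simp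
  qed
  moreover have "finite (boundary ` chains A q)" using fc unfolding fsub_def by simp
  moreover have "\<forall>x\<in>boundary ` chains A q. finite x"
  proof
    fix x assume "x \<in> boundary ` chains A q"
    then obtain c where c: "x = boundary c" "c \<in> chains A q" by blast
    show "finite x" unfolding c(1) by (rule finite_boundary[OF finite_chain[OF assms c(2)] elts[OF c(2)]])
  qed
  ultimately show ?thesis unfolding fsub_def by blast
qed

lemma fsub_nullchains: "finite A' \<Longrightarrow> finite B' \<Longrightarrow> fsub (nullchains A' B' p)"
  unfolding nullchains_def by (intro fsub_ssum fsub_chains fsub_image_boundary)

lemma relcycles_mono: "A \<subseteq> A' \<Longrightarrow> B \<subseteq> B' \<Longrightarrow> relcycles A B p \<subseteq> relcycles A' B' p"
  unfolding relcycles_def using chains_mono by blast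

lemma nullchains_mono: "A \<subseteq> A' \<Longrightarrow> B \<subseteq> B' \<Longrightarrow> nullchains A B p \<subseteq> nullchains A' B' p"
  unfolding nullchains_def by (intro ssum_mono image_mono chains_mono)

lemma hrank_int:
  assumes "finite A" "finite A'" "finite B'"
  shows "int (hrank A B A' B' p) = int (gf2dim (ssum (relcycles A B p) (nullchains A' B' p)))
     - int (gf2dim (nullchains A' B' p))"
proof -
  have "gf2dim (nullchains A' B' p) \<le> gf2dim (ssum (relcycles A B p) (nullchains A' B' p))"
    using assms fsub_relcycles[OF assms(1), of B p] fsub_nullchains[OF assms(2,3), of p]
    by (intro dim_mono fsub_nullchains fsub_ssum fsub_relcycles ssum_sup2)
       (auto simp: fsub_def)
  then show ?thesis unfolding hrank_def by simp
qed

lemma ssum_absorb: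
  assumes "fsub Z" "fsub N" "fsub N'" "N \<subseteq> N'"
  shows "ssum (ssum Z N) N' = ssum Z N'"
proof
  have h1: "ssum Z N \<subseteq> ssum Z N'" using assms(4) by (rule ssum_mono[OF order_refl])
  have h2: "N' \<subseteq> ssum Z N'" using assms ssum_sup2 unfolding fsub_def by blast
  have h3: "subsp (ssum Z N')" using assms ssum_subsp unfolding fsub_def by blast
  show "ssum (ssum Z N) N' \<subseteq> ssum Z N'"
    by (rule ssum_least[OF h3 h1 h2])
  have "Z \<subseteq> ssum Z N" using assms ssum_sup1 unfolding fsub_def by blast
  then show "ssum Z N' \<subseteq> ssum (ssum Z N) N'"
    by (rule ssum_mono) simp
qed

lemma hrank_mult_nonneg:
  assumes fin: "finite A0" "finite A1" "finite A2" "finite B2" "finite A3" "finite B3"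
    and sub: "A0 \<subseteq> A1" "B0 \<subseteq> B1" "A2 \<subseteq> A3" "B2 \<subseteq> B3"
  shows "0 \<le> int (hrank A1 B1 A2 B2 p) - int (hrank A0 B0 A2 B2 p)
            - int (hrank A1 B1 A3 B3 p) + int (hrank A0 B0 A3 B3 p)"
proof -
  define Z0 where "Z0 = relcycles A0 B0 p"
  define Z1 where "Z1 = relcycles A1 B1 p"
  define N2 where "N2 = nullchains A2 B2 p"
  define N3 where "N3 = nullchains A3 B3 p"
  have f: "fsub Z0" "fsub Z1" "fsub N2" "fsub N3"
    unfolding Z0_def Z1_def N2_def N3_def using fin
    by (auto intro: fsub_relcycles fsub_nullchains)
  have s: "Z0 \<subseteq> Z1" "N2 \<subseteq> N3" unfolding Z0_def Z1_def N2_def N3_def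
    using relcycles_mono[OF sub(1,2)] nullchains_mono[OF sub(3,4)] by auto
  have "int (gf2dim (ssum (ssum Z1 N2) N3)) - int (gf2dim (ssum (ssum Z0 N2) N3))
      \<le> int (gf2dim (ssum Z1 N2)) - int (gf2dim (ssum Z0 N2))"
    using f s by (intro key_ineq fsub_ssum ssum_mono) auto
  moreover have "ssum (ssum Z1 N2) N3 = ssum Z1 N3" "ssum (ssum Z0 N2) N3 = ssum Z0 N3"
    using ssum_absorb[OF f(2) f(3) f(4) s(2)] ssum_absorb[OF f(1) f(3) f(4) s(2)] by auto
  ultimately have main: "int (gf2dim (ssum Z1 N3)) - int (gf2dim (ssum Z0 N3))
      \<le> int (gf2dim (ssum Z1 N2)) - int (gf2dim (ssum Z0 N2))" by simp
  have e1: "int (hrank A1 B1 A2 B2 p) = int (gf2dim (ssum Z1 N2)) - int (gf2dim N2)"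
    unfolding Z1_def N2_def using fin by (intro hrank_int) auto
  have e2: "int (hrank A0 B0 A2 B2 p) = int (gf2dim (ssum Z0 N2)) - int (gf2dim N2)"
    unfolding Z0_def N2_def using fin by (intro hrank_int) auto
  have e3: "int (hrank A1 B1 A3 B3 p) = int (gf2dim (ssum Z1 N3)) - int (gf2dim N3)"
    unfolding Z1_def N3_def using fin by (intro hrank_int) auto
  have e4: "int (hrank A0 B0 A3 B3 p) = int (gf2dim (ssum Z0 N3)) - int (gf2dim N3)"
    unfolding Z0_def N3_def using fin by (intro hrank_int) auto
  show ?thesis using main e1 e2 e3 e4 by linarith
qed

context
  fixes S :: "real set"
  assumes finS: "finite S"
begin

lemma cs_len: "length (sorted_list_of_set S) = card S" by simp
lemma cs_set: "set (sorted_list_of_set S) = S" using finS by simp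

lemma nth_lt: "i < j \<Longrightarrow> j < card S \<Longrightarrow> sorted_list_of_set S ! i < sorted_list_of_set S ! j"
  using sorted_wrt_nth_less[OF strict_sorted_list_of_set, of i j S] by simp

lemma nth_le_iff: "i < card S \<Longrightarrow> j < card S \<Longrightarrow>
    sorted_list_of_set S ! i \<le> sorted_list_of_set S ! j \<longleftrightarrow> i \<le> j"
proof
  assume h: "sorted_list_of_set S ! i \<le> sorted_list_of_set S ! j" "i < card S"
  show "i \<le> j"
  proof (rule ccontr)
    assume "\<not> i \<le> j"
    then have "sorted_list_of_set S ! j < sorted_list_of_set S ! i" using nth_lt h(2) by simp
    then show False using h(1) by simp
  qed
next
  assume "i \<le> j" "j < card S"
  then show "sorted_list_of_set S ! i \<le> sorted_list_of_set S ! j"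
    using nth_lt[of i j] by (cases "i = j") auto
qed

lemma nth_in: "i < card S \<Longrightarrow> sorted_list_of_set S ! i \<in> S"
  using cs_set nth_mem[of i "sorted_list_of_set S"] by simp

lemma in_nth: "y \<in> S \<Longrightarrow> \<exists>i<card S. sorted_list_of_set S ! i = y"
  using cs_set in_set_conv_nth[of y "sorted_list_of_set S"] by auto

lemma rank_nth: assumes "i < card S" shows "card {x\<in>S. x \<le> sorted_list_of_set S ! i} = Suc i"
proof -
  have "{x\<in>S. x \<le> sorted_list_of_set S ! i} = (\<lambda>j. sorted_list_of_set S ! j) ` {0..i}"
  proof
    show "{x\<in>S. x \<le> sorted_list_of_set S ! i} \<subseteq> (\<lambda>j. sorted_list_of_set S ! j) ` {0..i}"
    proof
      fix x assume "x \<in> {x\<in>S. x \<le> sorted_list_of_set S ! i}"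
      then obtain j where "j < card S" "sorted_list_of_set S ! j = x" "x \<le> sorted_list_of_set S ! i"
        using in_nth by auto
      then have "j \<le> i" using nth_le_iff[of j i] assms by simp
      then show "x \<in> (\<lambda>j. sorted_list_of_set S ! j) ` {0..i}" using \<open>sorted_list_of_set S ! j = x\<close> by auto
    qed
    show "(\<lambda>j. sorted_list_of_set S ! j) ` {0..i} \<subseteq> {x\<in>S. x \<le> sorted_list_of_set S ! i}"
    proof
      fix x assume "x \<in> (\<lambda>j. sorted_list_of_set S ! j) ` {0..i}"
      then obtain j where "j \<le> i" "x = sorted_list_of_set S ! j" by auto
      then show "x \<in> {x\<in>S. x \<le> sorted_list_of_set S ! i}" using nth_le_iff[of j i] nth_in[of j] assms by simp
    qed
  qed
  moreover have "inj_on (\<lambda>j. sorted_list_of_set S ! j) {0..i}"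
  proof (rule inj_onI)
    fix a b assume "a \<in> {0..i}" "b \<in> {0..i}" "sorted_list_of_set S ! a = sorted_list_of_set S ! b"
    moreover have "a < card S" "b < card S" using calculation assms by auto
    ultimately show "a = b" using nth_le_iff[of a b] nth_le_iff[of b a] by simp
  qed
  ultimately show ?thesis by (simp add: card_image)
qed

lemma urank_nth: assumes "i < card S" shows "card {x\<in>S. sorted_list_of_set S ! i \<le> x} = card S - i"
proof -
  have "{x\<in>S. sorted_list_of_set S ! i \<le> x} = (\<lambda>j. sorted_list_of_set S ! j) ` {i..<card S}"
  proof
    show "{x\<in>S. sorted_list_of_set S ! i \<le> x} \<subseteq> (\<lambda>j. sorted_list_of_set S ! j) ` {i..<card S}"
    proof
      fix x assume "x \<in> {x\<in>S. sorted_list_of_set S ! i \<le> x}"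
      then obtain j where "j < card S" "sorted_list_of_set S ! j = x" "sorted_list_of_set S ! i \<le> x"
        using in_nth by auto
      then have "i \<le> j" using nth_le_iff[of i j] assms by simp
      then show "x \<in> (\<lambda>j. sorted_list_of_set S ! j) ` {i..<card S}" using \<open>sorted_list_of_set S ! j = x\<close> \<open>j < card S\<close> by auto
    qed
    show "(\<lambda>j. sorted_list_of_set S ! j) ` {i..<card S} \<subseteq> {x\<in>S. sorted_list_of_set S ! i \<le> x}"
    proof
      fix x assume "x \<in> (\<lambda>j. sorted_list_of_set S ! j) ` {i..<card S}"
      then obtain j where "i \<le> j" "j < card S" "x = sorted_list_of_set S ! j" by auto
      then show "x \<in> {x\<in>S. sorted_list_of_set S ! i \<le> x}" using nth_le_iff[of i j] nth_in[of j] assms by simp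
    qed
  qed
  moreover have "inj_on (\<lambda>j. sorted_list_of_set S ! j) {i..<card S}"
  proof (rule inj_onI)
    fix a b assume "a \<in> {i..<card S}" "b \<in> {i..<card S}" "sorted_list_of_set S ! a = sorted_list_of_set S ! b"
    moreover have "a < card S" "b < card S" using calculation by auto
    ultimately show "a = b" using nth_le_iff[of a b] nth_le_iff[of b a] by simp
  qed
  ultimately show ?thesis by (simp add: card_image)
qed

lemma downset_sub:
  assumes "A \<subseteq> S" "B \<subseteq> S"
    and dA: "\<And>x y. x \<in> A \<Longrightarrow> y \<in> S \<Longrightarrow> y \<le> x \<Longrightarrow> y \<in> A"
    and dB: "\<And>x y. x \<in> B \<Longrightarrow> y \<in> S \<Longrightarrow> y \<le> x \<Longrightarrow> y \<in> B"
    and "card A \<le> card B"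
  shows "A \<subseteq> B"
proof (rule ccontr)
  assume "\<not> A \<subseteq> B"
  then obtain a where a: "a \<in> A" "a \<notin> B" by blast
  have "B \<subseteq> A"
  proof
    fix b assume "b \<in> B"
    then have "\<not> a \<le> b" using dB a assms(1) by blast
    then show "b \<in> A" using dA a \<open>b \<in> B\<close> assms(2) by auto
  qed
  then have "B \<subset> A" using a by blast
  then have "card B < card A" using finS assms(1) by (meson finite_subset psubset_card_mono)
  then show False using assms(5) by simp
qed

lemma upset_sub:
  assumes "A \<subseteq> S" "B \<subseteq> S"
    and dA: "\<And>x y. x \<in> A \<Longrightarrow> y \<in> S \<Longrightarrow> x \<le> y \<Longrightarrow> y \<in> A"
    and dB: "\<And>x y. x \<in> B \<Longrightarrow> y \<in> S \<Longrightarrow> x \<le> y \<Longrightarrow> y \<in> B"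
    and "card A \<le> card B"
  shows "A \<subseteq> B"
proof (rule ccontr)
  assume "\<not> A \<subseteq> B"
  then obtain a where a: "a \<in> A" "a \<notin> B" by blast
  have "B \<subseteq> A"
  proof
    fix b assume "b \<in> B"
    then have "\<not> b \<le> a" using dB a assms(1) by blast
    then show "b \<in> A" using dA a \<open>b \<in> B\<close> assms(2) by auto
  qed
  then have "B \<subset> A" using a by blast
  then have "card B < card A" using finS assms(1) by (meson finite_subset psubset_card_mono)
  then show False using assms(5) by simp
qed

end

lemma image_mset_sum: "image_mset g (sum F A) = (\<Sum>x\<in>A. image_mset g (F x))"
  by (induction A rule: infinite_finite_induct) auto

lemma filter_mset_sum: "filter_mset P (sum F A) = (\<Sum>x\<in>A. filter_mset P (F x))"
  by (induction A rule: infinite_finite_induct) auto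

lemma replicate_mset_add: "replicate_mset (a + b) x = replicate_mset a x + replicate_mset b x"
  by (induction a) auto

lemma sum_replicate_mset: "(\<Sum>i\<in>A. replicate_mset (h i) x) = replicate_mset (\<Sum>i\<in>A. h i) x"
  by (induction A rule: infinite_finite_induct) (auto simp: replicate_mset_add)

lemma nat_sum: "\<forall>i\<in>A. 0 \<le> h i \<Longrightarrow> nat (\<Sum>i\<in>A. h i) = (\<Sum>i\<in>A. nat (h i))"
  by (induction A rule: infinite_finite_induct) (auto simp: nat_add_distrib sum_nonneg)

lemma tele: "(a::nat) \<le> b \<Longrightarrow> (\<Sum>k\<in>{a<..b}. (h k - h (k - 1) :: int)) = h b - h a"
proof (induction b)
  case 0 then show ?case by simp
next
  case (Suc b)
  show ?case
  proof (cases "a = Suc b")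
    case True then show ?thesis by simp
  next
    case False
    then have "a \<le> b" using Suc.prems by simp
    have "{a<..Suc b} = insert (Suc b) {a<..b}" using \<open>a \<le> b\<close> by auto
    then show ?thesis using Suc.IH[OF \<open>a \<le> b\<close>] by simp
  qed
qed

definition mult2 :: "(nat \<Rightarrow> nat \<Rightarrow> int) \<Rightarrow> nat \<Rightarrow> nat \<Rightarrow> int" where
  "mult2 r k j = r k (j - 1) - r (k - 1) (j - 1) - r k j + r (k - 1) j"

lemma tele2:
  fixes a b c d :: nat
  assumes "a \<le> b" "c \<le> d"
  shows "(\<Sum>k\<in>{a<..b}. \<Sum>j\<in>{c<..d}. mult2 r k j) = r b c - r a c - r b d + r a d"
proof -
  have "(\<Sum>j\<in>{c<..d}. mult2 r k j) = - ((r k d - r (k - 1) d) - (r k c - r (k - 1) c))" for k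
  proof -
    have "(\<Sum>j\<in>{c<..d}. mult2 r k j) = - (\<Sum>j\<in>{c<..d}. (r k j - r (k - 1) j) - (r k (j - 1) - r (k - 1) (j - 1)))"
      unfolding mult2_def by (simp add: sum_negf[symmetric] algebra_simps)
    also have "\<dots> = - ((r k d - r (k - 1) d) - (r k c - r (k - 1) c))"
      using tele[OF assms(2), of "\<lambda>j. r k j - r (k - 1) j"] by simp
    finally show ?thesis .
  qed
  then have "(\<Sum>k\<in>{a<..b}. \<Sum>j\<in>{c<..d}. mult2 r k j)
     = (\<Sum>k\<in>{a<..b}. (r k c - r (k - 1) c)) - (\<Sum>k\<in>{a<..b}. (r k d - r (k - 1) d))"
    by (simp add: sum_subtractf)
  also have "\<dots> = (r b c - r a c) - (r b d - r a d)"
    using tele[OF assms(1), of "\<lambda>k. r k c"] tele[OF assms(1), of "\<lambda>k. r k d"] by simp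
  finally show ?thesis by simp
qed

lemma blocks:
  fixes \<tau> :: "nat \<Rightarrow> nat"
  assumes mono: "\<And>K. K < N \<Longrightarrow> \<tau> K \<le> \<tau> (Suc K)" and t0: "\<tau> 0 = 0"
  shows "(\<Sum>k\<in>{1..\<tau> N}. h k) = (\<Sum>K\<in>{1..N}. \<Sum>k\<in>{\<tau> (K - 1)<..\<tau> K}. h k)"
  using mono
proof (induction N)
  case 0 then show ?case using t0 by auto
next
  case (Suc N)
  have le: "\<tau> N \<le> \<tau> (Suc N)" using Suc.prems by simp
  have "{1..\<tau> (Suc N)} = {1..\<tau> N} \<union> {\<tau> N<..\<tau> (Suc N)}" using le by auto
  then have "(\<Sum>k\<in>{1..\<tau> (Suc N)}. h k) = (\<Sum>k\<in>{1..\<tau> N}. h k) + (\<Sum>k\<in>{\<tau> N<..\<tau> (Suc N)}. h k)"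
    by (simp add: sum.union_disjoint[symmetric] ivl_disj_int)
  also have "(\<Sum>k\<in>{1..\<tau> N}. h k) = (\<Sum>K\<in>{1..N}. \<Sum>k\<in>{\<tau> (K - 1)<..\<tau> K}. h k)"
    using Suc.IH Suc.prems by simp
  finally show ?case by simp
qed


lemma filter_replicate_mset: "filter_mset P (replicate_mset n x) = (if P x then replicate_mset n x else {#})"
  by (induction n) auto

definition Dgm :: "nat \<Rightarrow> (nat \<Rightarrow> real) \<Rightarrow> (nat \<Rightarrow> nat \<Rightarrow> int) \<Rightarrow> (real \<times> real) multiset" where
  "Dgm N v \<mu> = (\<Sum>k\<in>{1..2*N}. \<Sum>j\<in>{k<..2*N}.
        if v k \<noteq> v j then replicate_mset (nat (\<mu> k j)) (v k, v j) else {#})"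

lemma Dgm_full: "Dgm N v \<mu> = (\<Sum>k\<in>{1..2*N}. \<Sum>j\<in>{1..2*N}.
        if k < j \<and> v k \<noteq> v j then replicate_mset (nat (\<mu> k j)) (v k, v j) else {#})"
proof -
  have "(\<Sum>j\<in>{k<..2*N}. if v k \<noteq> v j then replicate_mset (nat (\<mu> k j)) (v k, v j) else {#})
      = (\<Sum>j\<in>{1..2*N}. if k < j \<and> v k \<noteq> v j then replicate_mset (nat (\<mu> k j)) (v k, v j) else {#})"
    if "k \<in> {1..2*N}" for k
  proof -
    have eq: "{k<..2*N} = {j \<in> {1..2*N}. k < j}" using that by auto
    show ?thesis unfolding eq by (subst sum.inter_filter) (auto intro!: sum.cong)
  qed
  then show ?thesis unfolding Dgm_def by (rule sum.cong[OF refl])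
qed

lemma mono_gen:
  fixes \<tau> :: "nat \<Rightarrow> nat"
  assumes "\<And>K. K < M \<Longrightarrow> \<tau> K \<le> \<tau> (Suc K)" "a \<le> b" "b \<le> M"
  shows "\<tau> a \<le> \<tau> b"
  using assms(2,3)
proof (induction b)
  case 0 then show ?case by simp
next
  case (Suc b)
  show ?case
  proof (cases "a = Suc b")
    case False
    then have "\<tau> a \<le> \<tau> b" using Suc by simp
    also have "\<tau> b \<le> \<tau> (Suc b)" using assms(1) Suc.prems by simp
    finally show ?thesis .
  qed simp
qed

lemma Dgm_coarsen:
  fixes n m :: nat and r :: "nat \<Rightarrow> nat \<Rightarrow> int" and \<tau> :: "nat \<Rightarrow> nat"
    and vf vg :: "nat \<Rightarrow> real" and \<psi> :: "real \<Rightarrow> real"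
  assumes t0: "\<tau> 0 = 0" and tmono: "\<And>K. K < 2*m \<Longrightarrow> \<tau> K \<le> \<tau> (Suc K)"
    and tend: "\<tau> (2*m) = 2*n"
    and val: "\<And>K k. K \<in> {1..2*m} \<Longrightarrow> k \<in> {\<tau> (K - 1)<..\<tau> K} \<Longrightarrow> vg K = \<psi> (vf k)"
    and nonneg: "\<And>k j. 0 \<le> mult2 r k j"
  shows "Dgm m vg (mult2 (\<lambda>K J. r (\<tau> K) (\<tau> J)))
       = image_mset (map_prod \<psi> \<psi>) (filter_mset (\<lambda>(b,d). \<psi> b \<noteq> \<psi> d) (Dgm n vf (mult2 r)))"
proof -
  define F where "F = (\<lambda>k j. if k < j \<and> \<psi> (vf k) \<noteq> \<psi> (vf j)
      then replicate_mset (nat (mult2 r k j)) (\<psi> (vf k), \<psi> (vf j)) else {#})"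
  define G where "G = (\<lambda>K J (c::nat). if K < J \<and> vg K \<noteq> vg J then replicate_mset c (vg K, vg J) else {#})"
  have "image_mset (map_prod \<psi> \<psi>) (filter_mset (\<lambda>(b,d). \<psi> b \<noteq> \<psi> d) (Dgm n vf (mult2 r)))
      = (\<Sum>k\<in>{1..2*n}. \<Sum>j\<in>{1..2*n}. F k j)"
    unfolding Dgm_full filter_mset_sum image_mset_sum F_def
    by (intro sum.cong refl) (auto simp: filter_replicate_mset)
  also have "\<dots> = (\<Sum>K\<in>{1..2*m}. \<Sum>k\<in>{\<tau> (K - 1)<..\<tau> K}. \<Sum>J\<in>{1..2*m}. \<Sum>j\<in>{\<tau> (J - 1)<..\<tau> J}. F k j)"
  proof -
    have B: "(\<Sum>k\<in>{1..2*n}. h k) = (\<Sum>K\<in>{1..2*m}. \<Sum>k\<in>{\<tau> (K - 1)<..\<tau> K}. h k)" for h :: "nat \<Rightarrow> (real \<times> real) multiset"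
      using blocks[of "2*m" \<tau>, OF tmono t0] tend by simp
    have "(\<Sum>k\<in>{1..2*n}. \<Sum>j\<in>{1..2*n}. F k j) = (\<Sum>K\<in>{1..2*m}. \<Sum>k\<in>{\<tau> (K - 1)<..\<tau> K}. \<Sum>j\<in>{1..2*n}. F k j)"
      by (rule B)
    also have "\<dots> = (\<Sum>K\<in>{1..2*m}. \<Sum>k\<in>{\<tau> (K - 1)<..\<tau> K}. \<Sum>J\<in>{1..2*m}. \<Sum>j\<in>{\<tau> (J - 1)<..\<tau> J}. F k j)"
      by (subst B) (rule refl)
    finally show ?thesis .
  qed
  also have "\<dots> = (\<Sum>K\<in>{1..2*m}. \<Sum>J\<in>{1..2*m}. G K J (nat (mult2 (\<lambda>K J. r (\<tau> K) (\<tau> J)) K J)))"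
  proof (rule sum.cong[OF refl])
    fix K assume K: "K \<in> {1..2*m}"
    have "(\<Sum>k\<in>{\<tau> (K - 1)<..\<tau> K}. \<Sum>J\<in>{1..2*m}. \<Sum>j\<in>{\<tau> (J - 1)<..\<tau> J}. F k j)
        = (\<Sum>J\<in>{1..2*m}. \<Sum>k\<in>{\<tau> (K - 1)<..\<tau> K}. \<Sum>j\<in>{\<tau> (J - 1)<..\<tau> J}. F k j)"
      by (rule sum.swap)
    also have "\<dots> = (\<Sum>J\<in>{1..2*m}. G K J (nat (mult2 (\<lambda>K J. r (\<tau> K) (\<tau> J)) K J)))"
    proof (rule sum.cong[OF refl])
      fix J assume J: "J \<in> {1..2*m}"
      have le1: "\<tau> (K - 1) \<le> \<tau> K" using tmono K by (cases K) auto
      have le2: "\<tau> (J - 1) \<le> \<tau> J" using tmono J by (cases J) auto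
      have FG: "F k j = G K J (nat (mult2 r k j))"
        if k: "k \<in> {\<tau> (K - 1)<..\<tau> K}" and j: "j \<in> {\<tau> (J - 1)<..\<tau> J}" for k j
      proof -
        have vk: "\<psi> (vf k) = vg K" using val K k by simp
        have vj: "\<psi> (vf j) = vg J" using val J j by simp
        have "(k < j \<and> vg K \<noteq> vg J) \<longleftrightarrow> (K < J \<and> vg K \<noteq> vg J)"
        proof (cases "K < J")
          case True
          then have "\<tau> K \<le> \<tau> (J - 1)" using J by (intro mono_gen[where M="2*m" and \<tau>=\<tau>, OF tmono]) auto
          then show ?thesis using k j True by auto
        next
          case False
          show ?thesis
          proof (cases "K = J")
            case False
            then have "J < K" using \<open>\<not> K < J\<close> by simp
            then have "\<tau> J \<le> \<tau> (K - 1)" using K by (intro mono_gen[where M="2*m" and \<tau>=\<tau>, OF tmono]) auto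
            then show ?thesis using k j \<open>\<not> K < J\<close> by auto
          qed (use \<open>\<not> K < J\<close> in auto)
        qed
        then show ?thesis unfolding F_def G_def vk vj by simp
      qed
      have "(\<Sum>k\<in>{\<tau> (K - 1)<..\<tau> K}. \<Sum>j\<in>{\<tau> (J - 1)<..\<tau> J}. F k j)
          = (\<Sum>k\<in>{\<tau> (K - 1)<..\<tau> K}. \<Sum>j\<in>{\<tau> (J - 1)<..\<tau> J}. G K J (nat (mult2 r k j)))"
        using FG by simp
      also have "\<dots> = G K J (\<Sum>k\<in>{\<tau> (K - 1)<..\<tau> K}. \<Sum>j\<in>{\<tau> (J - 1)<..\<tau> J}. nat (mult2 r k j))"
      proof (cases "K < J \<and> vg K \<noteq> vg J")
        case True then show ?thesis unfolding G_def by (simp add: sum_replicate_mset)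
      next
        case False then show ?thesis unfolding G_def by (simp only: if_not_P if_False sum.neutral_const)
      qed
      moreover have e2: "(\<Sum>k\<in>{\<tau> (K - 1)<..\<tau> K}. \<Sum>j\<in>{\<tau> (J - 1)<..\<tau> J}. nat (mult2 r k j))
          = nat (\<Sum>k\<in>{\<tau> (K - 1)<..\<tau> K}. \<Sum>j\<in>{\<tau> (J - 1)<..\<tau> J}. mult2 r k j)"
        using nonneg by (simp add: nat_sum sum_nonneg)
      moreover have e3: "(\<Sum>k\<in>{\<tau> (K - 1)<..\<tau> K}. \<Sum>j\<in>{\<tau> (J - 1)<..\<tau> J}. mult2 r k j)
          = mult2 (\<lambda>K J. r (\<tau> K) (\<tau> J)) K J"
        by (subst tele2[OF le1 le2]) (simp add: mult2_def)
      ultimately show "(\<Sum>k\<in>{\<tau> (K - 1)<..\<tau> K}. \<Sum>j\<in>{\<tau> (J - 1)<..\<tau> J}. F k j)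
          = G K J (nat (mult2 (\<lambda>K J. r (\<tau> K) (\<tau> J)) K J))" by simp
    qed
    finally show "(\<Sum>k\<in>{\<tau> (K - 1)<..\<tau> K}. \<Sum>J\<in>{1..2*m}. \<Sum>j\<in>{\<tau> (J - 1)<..\<tau> J}. F k j)
        = (\<Sum>J\<in>{1..2*m}. G K J (nat (mult2 (\<lambda>K J. r (\<tau> K) (\<tau> J)) K J)))" .
  qed
  also have "\<dots> = Dgm m vg (mult2 (\<lambda>K J. r (\<tau> K) (\<tau> J)))"
    unfolding Dgm_full G_def by simp
  finally show ?thesis by simp
qed

lemma sc_finite: "simplicial_complex K \<Longrightarrow> finite K"
  unfolding simplicial_complex_def by simp

lemma sc_finV: "simplicial_complex K \<Longrightarrow> finite (\<Union>K)"
  unfolding simplicial_complex_def by auto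

lemma sc_Vne: "simplicial_complex K \<Longrightarrow> K \<noteq> {} \<Longrightarrow> \<Union>K \<noteq> {}"
  unfolding simplicial_complex_def by auto

lemma critvals_len: "simplicial_complex K \<Longrightarrow> length (critvals K f) = card (f ` \<Union>K)"
  unfolding critvals_def by simp

lemma ext_space_sub: "fst (ext_space K f a) \<subseteq> K \<and> snd (ext_space K f a) \<subseteq> K"
  unfolding ext_space_def Let_def by auto

lemma ext_space_mono:
  assumes sc: "simplicial_complex K" and ne: "K \<noteq> {}" and ab: "a \<le> b"
  shows "fst (ext_space K f a) \<subseteq> fst (ext_space K f b) \<and> snd (ext_space K f a) \<subseteq> snd (ext_space K f b)"
proof -
  define S where "S = f ` \<Union>K"
  have finS: "finite S" unfolding S_def using sc_finV[OF sc] by simp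
  define n where "n = card S"
  have cs: "critvals K f = sorted_list_of_set S" unfolding critvals_def S_def by simp
  have n0: "0 < n" unfolding n_def S_def using sc_Vne[OF sc ne] sc_finV[OF sc] by (simp add: card_gt_0_iff)
  show ?thesis
  proof (cases "a = 0")
    case True then show ?thesis unfolding ext_space_def by simp
  next
    case a0: False
    show ?thesis
    proof (cases "b \<le> n")
      case True
      then have "a \<le> n" using ab by simp
      have "sorted_list_of_set S ! (a - 1) \<le> sorted_list_of_set S ! (b - 1)"
        using nth_le_iff[OF finS, of "a - 1" "b - 1"] ab a0 True unfolding n_def by simp
      then show ?thesis using True \<open>a \<le> n\<close> a0 ab unfolding ext_space_def Let_def cs
        by (auto simp: n_def)
    next
      case bn: False
      show ?thesis
      proof (cases "a \<le> n")
        case True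
        then show ?thesis using bn a0 ab unfolding ext_space_def Let_def cs by (auto simp: n_def)
      next
        case False
        have "sorted_list_of_set S ! (2 * n - b) \<le> sorted_list_of_set S ! (2 * n - a)"
        proof -
          have "2 * n - b < n" "2 * n - a < n" "2 * n - b \<le> 2 * n - a" using ab False n0 by auto
          then show ?thesis using nth_le_iff[OF finS, of "2 * n - b" "2 * n - a"] unfolding n_def by simp
        qed
        then show ?thesis using bn a0 ab False unfolding ext_space_def Let_def cs
          by (auto simp: n_def)
      qed
    qed
  qed
qed

lemma mult_nonneg:
  assumes sc: "simplicial_complex K" and ne: "K \<noteq> {}"
  shows "0 \<le> mult2 (ext_rank K f p) k j"
proof -
  have fin: "finite (fst (ext_space K f a))" "finite (snd (ext_space K f a))" for a
    using ext_space_sub[of K f a] sc_finite[OF sc] finite_subset by blast+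
  have m1: "fst (ext_space K f (k - 1)) \<subseteq> fst (ext_space K f k)" "snd (ext_space K f (k - 1)) \<subseteq> snd (ext_space K f k)"
    using ext_space_mono[OF sc ne, of "k - 1" k f] by auto
  have m2: "fst (ext_space K f (j - 1)) \<subseteq> fst (ext_space K f j)" "snd (ext_space K f (j - 1)) \<subseteq> snd (ext_space K f j)"
    using ext_space_mono[OF sc ne, of "j - 1" j f] by auto
  show ?thesis
    unfolding mult2_def ext_rank_def
    by (rule hrank_mult_nonneg[OF fin(1) fin(1) fin(1) fin(2) fin(1) fin(2) m1 m2])
qed

lemma EDg_Dgm: "simplicial_complex K \<Longrightarrow>
   EDg K f p = Dgm (card (f ` \<Union>K)) (ext_val K f) (mult2 (ext_rank K f p))"
  unfolding EDg_def Dgm_def ext_mult_def mult2_def Let_def by (simp add: critvals_len)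

lemma ext_val_in:
  assumes sc: "simplicial_complex K" and k: "1 \<le> k" "k \<le> 2 * card (f ` \<Union>K)"
  shows "ext_val K f k \<in> f ` \<Union>K"
proof -
  define S where "S = f ` \<Union>K"
  have finS: "finite S" unfolding S_def using sc_finV[OF sc] by simp
  have cs: "critvals K f = sorted_list_of_set S" unfolding critvals_def S_def by simp
  show ?thesis
  proof (cases "k \<le> card S")
    case True
    then show ?thesis using nth_in[OF finS, of "k - 1"] k unfolding ext_val_def Let_def cs S_def[symmetric]
      by simp
  next
    case False
    then show ?thesis using nth_in[OF finS, of "2 * card S - k"] k unfolding ext_val_def Let_def cs S_def[symmetric]
      by simp
  qed
qed

lemma mem_sum_mset: "x \<in># sum F A \<Longrightarrow> \<exists>a\<in>A. x \<in># F a"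
  by (induction A rule: infinite_finite_induct) auto

lemma EDg_points:
  assumes sc: "simplicial_complex K"
  shows "set_mset (EDg K f p) \<subseteq> f ` \<Union>K \<times> f ` \<Union>K"
proof
  fix x assume "x \<in># EDg K f p"
  then obtain k j where "k \<in> {1..2 * card (f ` \<Union>K)}" "j \<in> {k<..2 * card (f ` \<Union>K)}"
     "x \<in># (if ext_val K f k \<noteq> ext_val K f j then replicate_mset (nat (mult2 (ext_rank K f p) k j)) (ext_val K f k, ext_val K f j) else {#})"
    unfolding EDg_Dgm[OF sc] Dgm_def by (blast dest: mem_sum_mset)
  then show "x \<in> f ` \<Union>K \<times> f ` \<Union>K" using ext_val_in[OF sc]
    by (auto split: if_splits)
qed

lemma Dgm_cong:
  assumes "\<And>k j. 1 \<le> k \<Longrightarrow> k \<le> 2*N \<Longrightarrow> 1 \<le> j \<Longrightarrow> j \<le> 2*N \<Longrightarrow> \<mu> k j = \<mu>' k j"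
  shows "Dgm N v \<mu> = Dgm N v \<mu>'"
  unfolding Dgm_def using assms by (intro sum.cong refl) auto

locale coarse =
  fixes K :: "'v set set" and f g :: "'v \<Rightarrow> real"
  assumes sc: "simplicial_complex K" and ne: "K \<noteq> {}"
    and H: "\<And>u v. u \<in> \<Union>K \<Longrightarrow> v \<in> \<Union>K \<Longrightarrow> f u \<le> f v \<Longrightarrow> g u \<le> g v"
begin

definition "V = \<Union>K"
definition "S = f ` V"
definition "S' = g ` V"
definition "n = card S"
definition "m = card S'"
definition "cs = sorted_list_of_set S"
definition "cs' = sorted_list_of_set S'"
definition "\<psi> x = g (SOME v. v \<in> V \<and> f v = x)"
definition "D c = {x\<in>S. \<psi> x \<le> c}"
definition "U c = {x\<in>S. c \<le> \<psi> x}"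
definition "\<tau> k = (if k = 0 then 0 else if k \<le> m then card (D (cs' ! (k - 1)))
                  else n + card (U (cs' ! (2 * m - k))))"

lemma finS: "finite S" unfolding S_def V_def using sc_finV[OF sc] by simp
lemma finS': "finite S'" unfolding S'_def V_def using sc_finV[OF sc] by simp
lemma n0: "0 < n" unfolding n_def S_def V_def using sc_Vne[OF sc ne] sc_finV[OF sc] by (simp add: card_gt_0_iff)
lemma m0: "0 < m" unfolding m_def S'_def V_def using sc_Vne[OF sc ne] sc_finV[OF sc] by (simp add: card_gt_0_iff)

lemma critf: "critvals K f = cs" unfolding critvals_def cs_def S_def V_def by simp
lemma critg: "critvals K g = cs'" unfolding critvals_def cs'_def S'_def V_def by simp
lemma lenf: "length cs = n" unfolding cs_def n_def by simp
lemma leng: "length cs' = m" unfolding cs'_def m_def by simp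

lemma psi_eq: assumes "v \<in> V" shows "\<psi> (f v) = g v"
proof -
  have "\<exists>u. u \<in> V \<and> f u = f v" using assms by blast
  then have u: "(SOME u. u \<in> V \<and> f u = f v) \<in> V \<and> f (SOME u. u \<in> V \<and> f u = f v) = f v"
    by (rule someI_ex)
  define u where "u = (SOME u. u \<in> V \<and> f u = f v)"
  have "u \<in> V" "f u = f v" using u unfolding u_def by auto
  then have "g u \<le> g v" "g v \<le> g u" using H assms unfolding V_def by auto
  then show ?thesis unfolding \<psi>_def u_def[symmetric] by simp
qed

lemma psi_mono: assumes "x \<in> S" "y \<in> S" "x \<le> y" shows "\<psi> x \<le> \<psi> y"
proof -
  obtain u v where "u \<in> V" "v \<in> V" "x = f u" "y = f v" using assms unfolding S_def by auto
  then show ?thesis using psi_eq H assms(3) unfolding V_def by auto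
qed

lemma psi_S: "x \<in> S \<Longrightarrow> \<psi> x \<in> S'"
  unfolding S_def S'_def using psi_eq by auto

lemma psi_surj: "y \<in> S' \<Longrightarrow> \<exists>x\<in>S. \<psi> x = y"
  unfolding S_def S'_def using psi_eq by auto

lemma D_sub: "D c \<subseteq> S" unfolding D_def by auto
lemma U_sub: "U c \<subseteq> S" unfolding U_def by auto
lemma D_down: "x \<in> D c \<Longrightarrow> y \<in> S \<Longrightarrow> y \<le> x \<Longrightarrow> y \<in> D c"
proof -
  assume "x \<in> D c" "y \<in> S" "y \<le> x"
  then have "\<psi> y \<le> \<psi> x" "\<psi> x \<le> c" "x \<in> S" using psi_mono unfolding D_def by auto
  then show "y \<in> D c" using \<open>y \<in> S\<close> unfolding D_def by simp
qed
lemma U_up: "x \<in> U c \<Longrightarrow> y \<in> S \<Longrightarrow> x \<le> y \<Longrightarrow> y \<in> U c"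
proof -
  assume "x \<in> U c" "y \<in> S" "x \<le> y"
  then have "\<psi> x \<le> \<psi> y" "c \<le> \<psi> x" "x \<in> S" using psi_mono unfolding U_def by auto
  then show "y \<in> U c" using \<open>y \<in> S\<close> unfolding U_def by simp
qed
lemma D_card_le: "card (D c) \<le> n" unfolding n_def using D_sub finS card_mono by blast
lemma U_card_le: "card (U c) \<le> n" unfolding n_def using U_sub finS card_mono by blast
lemma D_card_pos: "c \<in> S' \<Longrightarrow> 0 < card (D c)"
proof -
  assume "c \<in> S'"
  then obtain x where "x \<in> S" "\<psi> x = c" using psi_surj by blast
  then have "x \<in> D c" unfolding D_def by simp
  moreover have "finite (D c)" using D_sub finS finite_subset by blast
  ultimately show ?thesis using card_gt_0_iff by blast
qed
lemma U_card_pos: "c \<in> S' \<Longrightarrow> 0 < card (U c)"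
proof -
  assume "c \<in> S'"
  then obtain x where "x \<in> S" "\<psi> x = c" using psi_surj by blast
  then have "x \<in> U c" unfolding U_def by simp
  moreover have "finite (U c)" using U_sub finS finite_subset by blast
  ultimately show ?thesis using card_gt_0_iff by blast
qed

lemma Dw: "{x\<in>S. x \<le> w} \<subseteq> S" "\<And>x y. x \<in> {x\<in>S. x \<le> w} \<Longrightarrow> y \<in> S \<Longrightarrow> y \<le> x \<Longrightarrow> y \<in> {x\<in>S. x \<le> w}"
  by auto
lemma Uw: "{x\<in>S. w \<le> x} \<subseteq> S" "\<And>x y. x \<in> {x\<in>S. w \<le> x} \<Longrightarrow> y \<in> S \<Longrightarrow> x \<le> y \<Longrightarrow> y \<in> {x\<in>S. w \<le> x}"
  by auto

lemma D_le: "card {x\<in>S. x \<le> w} \<le> card (D c) \<Longrightarrow> {x\<in>S. x \<le> w} \<subseteq> D c"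
  by (rule downset_sub[OF finS, of "{x\<in>S. x \<le> w}" "D c"]) (auto intro: D_down dest: D_sub[THEN subsetD])
lemma U_le: "card {x\<in>S. w \<le> x} \<le> card (U c) \<Longrightarrow> {x\<in>S. w \<le> x} \<subseteq> U c"
  by (rule upset_sub[OF finS, of "{x\<in>S. w \<le> x}" "U c"]) (auto intro: U_up dest: U_sub[THEN subsetD])
lemma D_ge: "card (D c) \<le> card {x\<in>S. x \<le> w} \<Longrightarrow> D c \<subseteq> {x\<in>S. x \<le> w}"
  by (rule downset_sub[OF finS, of "D c" "{x\<in>S. x \<le> w}"]) (auto intro: D_down dest: D_sub[THEN subsetD])
lemma U_ge: "card (U c) \<le> card {x\<in>S. w \<le> x} \<Longrightarrow> U c \<subseteq> {x\<in>S. w \<le> x}"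
  by (rule upset_sub[OF finS, of "U c" "{x\<in>S. w \<le> x}"]) (auto intro: U_up dest: U_sub[THEN subsetD])
lemma D_eq: "card {x\<in>S. x \<le> w} = card (D c) \<Longrightarrow> {x\<in>S. x \<le> w} = D c"
  using D_le[of w c] D_ge[of c w] by auto
lemma U_eq: "card {x\<in>S. w \<le> x} = card (U c) \<Longrightarrow> {x\<in>S. w \<le> x} = U c"
  using U_le[of w c] U_ge[of c w] by auto

lemma cs'_in: "i < m \<Longrightarrow> cs' ! i \<in> S'"
  unfolding cs'_def m_def by (rule nth_in[OF finS'])
lemma cs_in: "i < n \<Longrightarrow> cs ! i \<in> S"
  unfolding cs_def n_def by (rule nth_in[OF finS])
lemma cs_rank: "i < n \<Longrightarrow> card {x\<in>S. x \<le> cs ! i} = Suc i"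
  unfolding cs_def n_def by (rule rank_nth[OF finS])
lemma cs_urank: "i < n \<Longrightarrow> card {x\<in>S. cs ! i \<le> x} = n - i"
  unfolding cs_def n_def by (rule urank_nth[OF finS])
lemma cs'_le_iff: "i < m \<Longrightarrow> j < m \<Longrightarrow> cs' ! i \<le> cs' ! j \<longleftrightarrow> i \<le> j"
  unfolding cs'_def m_def by (rule nth_le_iff[OF finS'])
lemma cs'_idx: "y \<in> S' \<Longrightarrow> \<exists>i<m. cs' ! i = y"
  unfolding cs'_def m_def by (rule in_nth[OF finS'])

lemma K_sub_V: "\<sigma> \<in> K \<Longrightarrow> \<sigma> \<subseteq> V" unfolding V_def by auto

lemma space_eq: assumes "k \<le> 2 * m" shows "ext_space K g k = ext_space K f (\<tau> k)"
proof -
  consider "k = 0" | "k \<noteq> 0" "k \<le> m" | "m < k" by linarith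
  then show ?thesis
  proof cases
    case 1 then show ?thesis unfolding \<tau>_def ext_space_def by simp
  next
    case 2
    define c where "c = cs' ! (k - 1)"
    have cS: "c \<in> S'" unfolding c_def using 2 by (intro cs'_in) simp
    define t where "t = card (D c)"
    have t: "\<tau> k = t" "0 < t" "t \<le> n" unfolding t_def \<tau>_def c_def using 2 D_card_pos[OF cS] D_card_le
      by (auto simp: c_def)
    define w where "w = cs ! (t - 1)"
    have "card {x\<in>S. x \<le> w} = t" unfolding w_def using cs_rank[of "t - 1"] t by simp
    then have Deq: "{x\<in>S. x \<le> w} = D c" using D_eq t unfolding t_def by simp
    have iff: "f v \<le> w \<longleftrightarrow> g v \<le> c" if "v \<in> V" for v
    proof -
      have "f v \<in> S" using that unfolding S_def by simp
      then have "f v \<le> w \<longleftrightarrow> f v \<in> D c" using Deq by blast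
      also have "\<dots> \<longleftrightarrow> \<psi> (f v) \<le> c" unfolding D_def using \<open>f v \<in> S\<close> by simp
      finally show ?thesis using psi_eq[OF that] by simp
    qed
    have "ext_space K g k = ({\<sigma> \<in> K. \<forall>v\<in>\<sigma>. g v \<le> c}, {})"
      unfolding ext_space_def Let_def critg leng c_def using 2 by simp
    moreover have "ext_space K f (\<tau> k) = ({\<sigma> \<in> K. \<forall>v\<in>\<sigma>. f v \<le> w}, {})"
      unfolding ext_space_def Let_def critf lenf w_def using t by simp
    moreover have "{\<sigma> \<in> K. \<forall>v\<in>\<sigma>. g v \<le> c} = {\<sigma> \<in> K. \<forall>v\<in>\<sigma>. f v \<le> w}"
      using iff K_sub_V by blast
    ultimately show ?thesis by simp
  next
    case 3
    define c where "c = cs' ! (2 * m - k)"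
    have cS: "c \<in> S'" unfolding c_def using 3 m0 by (intro cs'_in) simp
    define u where "u = card (U c)"
    have t: "\<tau> k = n + u" "0 < u" "u \<le> n" unfolding u_def \<tau>_def c_def using 3 U_card_pos[OF cS] U_card_le
      by (auto simp: c_def)
    define w where "w = cs ! (n - u)"
    have "card {x\<in>S. w \<le> x} = u" unfolding w_def using cs_urank[of "n - u"] t by simp
    then have Ueq: "{x\<in>S. w \<le> x} = U c" using U_eq t unfolding u_def by simp
    have iff: "w \<le> f v \<longleftrightarrow> c \<le> g v" if "v \<in> V" for v
    proof -
      have "f v \<in> S" using that unfolding S_def by simp
      then have "w \<le> f v \<longleftrightarrow> f v \<in> U c" using Ueq by blast
      also have "\<dots> \<longleftrightarrow> c \<le> \<psi> (f v)" unfolding U_def using \<open>f v \<in> S\<close> by simp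
      finally show ?thesis using psi_eq[OF that] by simp
    qed
    have "ext_space K g k = (K, {\<sigma> \<in> K. \<forall>v\<in>\<sigma>. c \<le> g v})"
      unfolding ext_space_def Let_def critg leng c_def using 3 by simp
    moreover have "ext_space K f (\<tau> k) = (K, {\<sigma> \<in> K. \<forall>v\<in>\<sigma>. w \<le> f v})"
    proof -
      have "2 * n - (n + u) = n - u" by simp
      then show ?thesis unfolding ext_space_def Let_def critf lenf w_def t(1) using t by simp
    qed
    moreover have "{\<sigma> \<in> K. \<forall>v\<in>\<sigma>. c \<le> g v} = {\<sigma> \<in> K. \<forall>v\<in>\<sigma>. w \<le> f v}"
      using iff K_sub_V by blast
    ultimately show ?thesis by simp
  qed
qed

lemma finD: "finite (D c)" using D_sub finS finite_subset by blast
lemma finU: "finite (U c)" using U_sub finS finite_subset by blast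

lemma D_mono: "c1 \<le> c2 \<Longrightarrow> card (D c1) \<le> card (D c2)"
  by (rule card_mono[OF finD]) (auto simp: D_def)
lemma U_mono: "c1 \<le> c2 \<Longrightarrow> card (U c2) \<le> card (U c1)"
  by (rule card_mono[OF finU]) (auto simp: U_def)

lemma tau_mono: assumes "k < 2 * m" shows "\<tau> k \<le> \<tau> (Suc k)"
proof -
  consider "k = 0" | "k \<noteq> 0" "k < m" | "k = m" | "m < k" by linarith
  then show ?thesis
  proof cases
    case 1 then show ?thesis unfolding \<tau>_def by simp
  next
    case 2
    have "cs' ! (k - 1) \<le> cs' ! k" using cs'_le_iff[of "k - 1" k] 2 by simp
    then show ?thesis unfolding \<tau>_def using 2 D_mono by simp
  next
    case 3
    then show ?thesis unfolding \<tau>_def using D_card_le m0 by simp (meson le_add1 order_trans)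
  next
    case 4
    have "cs' ! (2 * m - Suc k) \<le> cs' ! (2 * m - k)" using cs'_le_iff[of "2 * m - Suc k" "2 * m - k"] 4 assms
      by simp
    then show ?thesis unfolding \<tau>_def using 4 U_mono by simp
  qed
qed

lemma tau_end: "\<tau> (2 * m) = 2 * n"
proof -
  have "U (cs' ! 0) = S"
  proof
    show "S \<subseteq> U (cs' ! 0)"
    proof
      fix x assume "x \<in> S"
      then obtain i where "i < m" "cs' ! i = \<psi> x" using cs'_idx psi_S by blast
      then have "cs' ! 0 \<le> \<psi> x" using cs'_le_iff[of 0 i] by simp
      then show "x \<in> U (cs' ! 0)" unfolding U_def using \<open>x \<in> S\<close> by simp
    qed
  qed (rule U_sub)
  then show ?thesis unfolding \<tau>_def using m0 n_def by simp
qed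

lemma tau0: "\<tau> 0 = 0" unfolding \<tau>_def by simp

lemma D_top: "D (cs' ! (m - 1)) = S"
proof
  show "S \<subseteq> D (cs' ! (m - 1))"
  proof
    fix x assume "x \<in> S"
    then obtain i where "i < m" "cs' ! i = \<psi> x" using cs'_idx psi_S by blast
    then have "\<psi> x \<le> cs' ! (m - 1)" using cs'_le_iff[of i "m - 1"] by simp
    then show "x \<in> D (cs' ! (m - 1))" unfolding D_def using \<open>x \<in> S\<close> by simp
  qed
qed (rule D_sub)

lemma val_eq:
  assumes K': "K' \<in> {1..2 * m}" and k: "k \<in> {\<tau> (K' - 1)<..\<tau> K'}"
  shows "ext_val K g K' = \<psi> (ext_val K f k)"
proof (cases "K' \<le> m")
  case True
  define c where "c = cs' ! (K' - 1)"
  have tK: "\<tau> K' = card (D c)" unfolding \<tau>_def c_def using True K' by simp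
  have kn: "1 \<le> k" "k \<le> n" using k tK D_card_le[of c] by auto
  define w where "w = cs ! (k - 1)"
  have wS: "w \<in> S" unfolding w_def using kn cs_in by simp
  have ef: "ext_val K f k = w" unfolding ext_val_def Let_def critf lenf w_def using kn by simp
  have eg: "ext_val K g K' = c" unfolding ext_val_def Let_def critg leng c_def using True by simp
  have rk: "card {x\<in>S. x \<le> w} = k" unfolding w_def using cs_rank[of "k - 1"] kn by simp
  have "card {x\<in>S. x \<le> w} \<le> card (D c)" using rk k tK by simp
  then have "{x\<in>S. x \<le> w} \<subseteq> D c" by (rule D_le)
  then have "w \<in> D c" using wS by blast
  then have up: "\<psi> w \<le> c" unfolding D_def by simp
  obtain i where i: "i < m" "cs' ! i = \<psi> w" using cs'_idx psi_S[OF wS] by blast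
  have i1: "i \<le> K' - 1" using up i cs'_le_iff[of i "K' - 1"] True K' unfolding c_def by simp
  have i2: "K' - 1 \<le> i"
  proof (cases "K' = 1")
    case False
    define c0 where "c0 = cs' ! (K' - 2)"
    have e: "K' - 1 - 1 = K' - 2" by simp
    have "K' - 1 \<noteq> 0" "K' - 1 \<le> m" using False True K' by auto
    then have t0: "\<tau> (K' - 1) = card (D c0)" unfolding \<tau>_def c0_def e[symmetric] by simp
    have "\<not> \<psi> w \<le> c0"
    proof
      assume "\<psi> w \<le> c0"
      then have "w \<in> D c0" unfolding D_def using wS by simp
      then have "{x\<in>S. x \<le> w} \<subseteq> D c0" using D_down by blast
      then have "card {x\<in>S. x \<le> w} \<le> card (D c0)" by (rule card_mono[OF finD])
      then have "k \<le> card (D c0)" using rk by simp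
      then show False using k t0 by simp
    qed
    then have "\<not> i \<le> K' - 2" using i cs'_le_iff[of i "K' - 2"] True K' unfolding c0_def by auto
    then show ?thesis by simp
  qed simp
  have "i = K' - 1" using i1 i2 by simp
  then show ?thesis using ef eg i unfolding c_def by simp
next
  case False
  define c where "c = cs' ! (2 * m - K')"
  have tK: "\<tau> K' = n + card (U c)" unfolding \<tau>_def c_def using False K' by simp
  have tprev: "n \<le> \<tau> (K' - 1)"
  proof (cases "K' - 1 = m")
    case True
    then show ?thesis unfolding \<tau>_def using D_top m0 n_def by simp
  next
    case False
    then have "K' - 1 \<noteq> 0" "\<not> K' - 1 \<le> m" using \<open>\<not> K' \<le> m\<close> by auto
    then show ?thesis unfolding \<tau>_def by simp
  qed
  have kn: "n < k" "k \<le> 2 * n" using k tK tprev U_card_le[of c] by auto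
  define w where "w = cs ! (2 * n - k)"
  have wS: "w \<in> S" unfolding w_def using kn cs_in by simp
  have ef: "ext_val K f k = w" unfolding ext_val_def Let_def critf lenf w_def using kn by simp
  have eg: "ext_val K g K' = c" unfolding ext_val_def Let_def critg leng c_def using False by simp
  have rk: "card {x\<in>S. w \<le> x} = k - n" unfolding w_def using cs_urank[of "2 * n - k"] kn by simp
  have "card {x\<in>S. w \<le> x} \<le> card (U c)" using rk k tK by auto
  then have "{x\<in>S. w \<le> x} \<subseteq> U c" by (rule U_le)
  then have "w \<in> U c" using wS by blast
  then have lo: "c \<le> \<psi> w" unfolding U_def by simp
  obtain i where i: "i < m" "cs' ! i = \<psi> w" using cs'_idx psi_S[OF wS] by blast
  have i1: "2 * m - K' \<le> i" using lo i cs'_le_iff[of "2 * m - K'" i] False K' unfolding c_def by simp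
  have i2: "i \<le> 2 * m - K'"
  proof (cases "K' - 1 = m")
    case False
    define c1 where "c1 = cs' ! (2 * m - (K' - 1))"
    have "K' - 1 \<noteq> 0" "\<not> K' - 1 \<le> m" using False \<open>\<not> K' \<le> m\<close> by auto
    then have t1: "\<tau> (K' - 1) = n + card (U c1)" unfolding \<tau>_def c1_def by simp
    have "\<not> c1 \<le> \<psi> w"
    proof
      assume "c1 \<le> \<psi> w"
      then have "w \<in> U c1" unfolding U_def using wS by simp
      then have "{x\<in>S. w \<le> x} \<subseteq> U c1" using U_up by blast
      then have "card {x\<in>S. w \<le> x} \<le> card (U c1)" by (rule card_mono[OF finU])
      then have "k - n \<le> card (U c1)" using rk by simp
      then show False using k t1 by auto
    qed
    then have "\<not> 2 * m - (K' - 1) \<le> i" using i cs'_le_iff[of "2 * m - (K' - 1)" i] False \<open>\<not> K' \<le> m\<close> K'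
      unfolding c1_def by auto
    then show ?thesis by simp
  qed (use i in simp)
  have "i = 2 * m - K'" using i1 i2 by simp
  then show ?thesis using ef eg i unfolding c_def by simp
qed

lemma rank_eq: "a \<le> 2 * m \<Longrightarrow> b \<le> 2 * m \<Longrightarrow> ext_rank K g p a b = ext_rank K f p (\<tau> a) (\<tau> b)"
  unfolding ext_rank_def using space_eq by simp

lemma EDg_coarse:
  "EDg K g p = image_mset (map_prod \<psi> \<psi>) (filter_mset (\<lambda>(b,d). \<psi> b \<noteq> \<psi> d) (EDg K f p))"
proof -
  have "EDg K g p = Dgm m (ext_val K g) (mult2 (ext_rank K g p))"
    using EDg_Dgm[OF sc] unfolding m_def S'_def V_def by simp
  also have "\<dots> = Dgm m (ext_val K g) (mult2 (\<lambda>a b. ext_rank K f p (\<tau> a) (\<tau> b)))"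
  proof (rule Dgm_cong)
    fix a b assume "1 \<le> a" "a \<le> 2 * m" "1 \<le> b" "b \<le> 2 * m"
    then show "mult2 (ext_rank K g p) a b = mult2 (\<lambda>a b. ext_rank K f p (\<tau> a) (\<tau> b)) a b"
      unfolding mult2_def using rank_eq by simp
  qed
  also have "\<dots> = image_mset (map_prod \<psi> \<psi>) (filter_mset (\<lambda>(b,d). \<psi> b \<noteq> \<psi> d)
      (Dgm n (ext_val K f) (mult2 (ext_rank K f p))))"
    by (rule Dgm_coarsen[where m=m and n=n and \<tau>=\<tau> and \<psi>=\<psi> and r="ext_rank K f p"
          and vf="ext_val K f" and vg="ext_val K g", OF tau0 tau_mono tau_end val_eq mult_nonneg[OF sc ne]])
  also have "Dgm n (ext_val K f) (mult2 (ext_rank K f p)) = EDg K f p"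
    using EDg_Dgm[OF sc] unfolding n_def S_def V_def by simp
  finally show ?thesis .
qed

end

definition okm :: "(real \<times> real) multiset \<Rightarrow> (real \<times> real) multiset \<Rightarrow> ((real \<times> real) \<times> (real \<times> real)) multiset \<Rightarrow> real \<Rightarrow> bool" where
  "okm D1 D2 M c \<longleftrightarrow> image_mset fst M \<subseteq># D1 \<and> image_mset snd M \<subseteq># D2 \<and>
     (\<forall>p\<in>#M. linf_dist (fst p) (snd p) \<le> c) \<and>
     (\<forall>x\<in>#D1 - image_mset fst M. diag_dist x \<le> c) \<and>
     (\<forall>y\<in>#D2 - image_mset snd M. diag_dist y \<le> c)"

definition close :: "(real \<times> real) multiset \<Rightarrow> (real \<times> real) multiset \<Rightarrow> real \<Rightarrow> bool" where
  "close D1 D2 c \<longleftrightarrow> 0 \<le> c \<and> (\<exists>M. okm D1 D2 M c)"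

lemma cost_finite: "finite ((\<lambda>(x, y). linf_dist x y) ` set_mset M \<union>
      diag_dist ` set_mset (D1 - image_mset fst M) \<union> diag_dist ` set_mset (D2 - image_mset snd M))"
  by simp

lemma cost_le_iff: "matching_cost D1 D2 M \<le> c \<longleftrightarrow>
   0 \<le> c \<and> (\<forall>p\<in>#M. linf_dist (fst p) (snd p) \<le> c) \<and>
     (\<forall>x\<in>#D1 - image_mset fst M. diag_dist x \<le> c) \<and>
     (\<forall>y\<in>#D2 - image_mset snd M. diag_dist y \<le> c)"
  unfolding matching_cost_def using cost_finite[of M D1 D2]
  by (subst Max_le_iff) (auto simp: case_prod_beta)

lemma cost_nonneg: "0 \<le> matching_cost D1 D2 M"
  unfolding matching_cost_def using cost_finite[of M D1 D2]
  by (intro Max_ge) auto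

lemma close_bottleneck: assumes "close D1 D2 c" shows "bottleneck D1 D2 \<le> c"
proof -
  obtain M where M: "okm D1 D2 M c" "0 \<le> c" using assms unfolding close_def by blast
  have "is_partial_matching D1 D2 M" using M unfolding okm_def is_partial_matching_def by simp
  moreover have "matching_cost D1 D2 M \<le> c" using M unfolding okm_def cost_le_iff by simp
  moreover have "bdd_below {matching_cost D1 D2 M | M. is_partial_matching D1 D2 M}"
    using cost_nonneg by (intro bdd_belowI[of _ 0]) auto
  ultimately have "bottleneck D1 D2 \<le> matching_cost D1 D2 M" unfolding bottleneck_def
    by (intro cInf_lower) auto
  then show ?thesis using \<open>matching_cost D1 D2 M \<le> c\<close> by simp
qed

lemma linf_sym: "linf_dist x y = linf_dist y x"
  unfolding linf_dist_def by (simp add: abs_minus_commute)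

lemma close_sym: assumes "close D1 D2 c" shows "close D2 D1 c"
proof -
  obtain M where M: "okm D1 D2 M c" "0 \<le> c" using assms unfolding close_def by blast
  have "okm D2 D1 (image_mset prod.swap M) c"
    using M unfolding okm_def by (auto simp: multiset.map_comp comp_def linf_sym)
  then show ?thesis using M unfolding close_def by blast
qed

lemma diag_lip: "diag_dist x \<le> linf_dist x y + diag_dist y"
  unfolding diag_dist_def linf_dist_def by (cases x, cases y) (simp, smt (verit))

lemma linf_tri: "linf_dist x z \<le> linf_dist x y + linf_dist y z"
  unfolding linf_dist_def by (cases x, cases y, cases z) (simp, smt (verit))

lemma ms_h1: "A \<subseteq># D \<Longrightarrow> x \<notin># A \<Longrightarrow> A \<subseteq># D - {#x#}"
  by (auto simp: subseteq_mset_def not_in_iff)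

lemma ms_h2: "w \<in># (D - {#x#}) - A \<Longrightarrow> w \<in># D - A"
  by (auto simp: in_diff_count split: if_splits)

lemma ms_h3: "w \<in># D - A \<Longrightarrow> w \<noteq> x \<Longrightarrow> w \<in># (D - {#x#}) - A"
  by (simp add: in_diff_count)

lemma ms_h4: "D - add_mset x A = (D - {#x#}) - A"
  by (simp add: multiset_eq_iff)

lemma ms_h5: "y \<notin># A \<Longrightarrow> y \<in># D \<Longrightarrow> y \<in># D - A"
  using count_greater_zero_iff[of D y] by (simp add: in_diff_count not_in_iff)

lemma okm_add:
  "okm D1 D2 (add_mset (x, y) M) c \<longleftrightarrow> x \<in># D1 \<and> y \<in># D2 \<and> linf_dist x y \<le> c \<and>
      okm (D1 - {#x#}) (D2 - {#y#}) M c"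
  unfolding okm_def image_mset_add_mset insert_subset_eq_iff
    ms_h4[of D1 x "image_mset fst M"] ms_h4[of D2 y "image_mset snd M"] by simp blast

lemma okm_trans:
  "okm D1 D2 M1 a \<Longrightarrow> okm D2 D3 M2 b \<Longrightarrow> 0 \<le> a \<Longrightarrow> 0 \<le> b \<Longrightarrow> \<exists>M. okm D1 D3 M (a + b)"
proof (induction M1 arbitrary: D1 D2 M2 D3)
  case empty
  have "okm D1 D3 {#} (a + b)" unfolding okm_def
  proof (intro conjI ballI)
    fix x assume "x \<in># D1 - image_mset fst {#}"
    then show "diag_dist x \<le> a + b" using empty.prems unfolding okm_def by fastforce
  next
    fix z assume z: "z \<in># D3 - image_mset snd {#}"
    show "diag_dist z \<le> a + b"
    proof (cases "z \<in># image_mset snd M2")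
      case True
      then obtain y where yz: "(y, z) \<in># M2" by auto
      then have yi: "y \<in># image_mset fst M2" by (auto intro!: image_eqI[where x="(y,z)"])
      have si: "image_mset fst M2 \<subseteq># D2" using empty.prems(2) unfolding okm_def by simp
      have "y \<in># D2" by (rule mset_subset_eqD[OF si yi])
      then have "diag_dist y \<le> a" using empty.prems(1) unfolding okm_def by simp
      moreover have "linf_dist y z \<le> b" using yz empty.prems(2) unfolding okm_def by fastforce
      ultimately show ?thesis using diag_lip[of z y] linf_sym[of z y] by simp
    next
      case False
      then have "z \<in># D3 - image_mset snd M2" using z by (simp add: ms_h5)
      then show ?thesis using empty.prems unfolding okm_def by fastforce
    qed
  qed auto
  then show ?case by blast
next
  case (add p M1)
  obtain x y where p: "p = (x, y)" by (cases p)
  have h1: "x \<in># D1" "y \<in># D2" "linf_dist x y \<le> a" "okm (D1 - {#x#}) (D2 - {#y#}) M1 a"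
    using add.prems(1) unfolding p okm_add by auto
  show ?case
  proof (cases "y \<in># image_mset fst M2")
    case True
    then obtain z where yz: "(y, z) \<in># M2" by auto
    define M2' where "M2' = M2 - {#(y, z)#}"
    have M2: "M2 = add_mset (y, z) M2'" unfolding M2'_def using yz by simp
    have h2: "z \<in># D3" "linf_dist y z \<le> b" "okm (D2 - {#y#}) (D3 - {#z#}) M2' b"
      using add.prems(2) unfolding M2 okm_add by auto
    obtain M' where M': "okm (D1 - {#x#}) (D3 - {#z#}) M' (a + b)"
      using add.IH[OF h1(4) h2(3) add.prems(3,4)] by blast
    have "okm D1 D3 (add_mset (x, z) M') (a + b)"
      unfolding okm_add using h1 h2 M' linf_tri[of x z y] by simp
    then show ?thesis by blast
  next
    case False
    have dy: "diag_dist y \<le> b"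
      using ms_h5[OF False h1(2)] add.prems(2) unfolding okm_def by simp
    have o2: "image_mset fst M2 \<subseteq># D2" "image_mset snd M2 \<subseteq># D3"
      "\<forall>p\<in>#M2. linf_dist (fst p) (snd p) \<le> b" "\<forall>w\<in>#D2 - image_mset fst M2. diag_dist w \<le> b"
      "\<forall>w\<in>#D3 - image_mset snd M2. diag_dist w \<le> b"
      using add.prems(2) unfolding okm_def by auto
    have "okm (D2 - {#y#}) D3 M2 b" unfolding okm_def
    proof (intro conjI)
      show "image_mset fst M2 \<subseteq># D2 - {#y#}" by (rule ms_h1[OF o2(1) False])
      show "\<forall>w\<in>#D2 - {#y#} - image_mset fst M2. diag_dist w \<le> b"
      proof
        fix w assume "w \<in># D2 - {#y#} - image_mset fst M2"
        then have "w \<in># D2 - image_mset fst M2" by (rule ms_h2)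
        then show "diag_dist w \<le> b" using o2(4) by simp
      qed
    qed (use o2 in auto)
    then obtain M' where M': "okm (D1 - {#x#}) D3 M' (a + b)"
      using add.IH[OF h1(4) _ add.prems(3,4)] by blast
    have "okm D1 D3 M' (a + b)" unfolding okm_def
    proof (intro conjI)
      show "image_mset fst M' \<subseteq># D1" using M' unfolding okm_def
        by (meson diff_subset_eq_self subset_mset.order_trans)
      show "\<forall>w\<in>#D1 - image_mset fst M'. diag_dist w \<le> a + b"
      proof
        fix w assume w: "w \<in># D1 - image_mset fst M'"
        show "diag_dist w \<le> a + b"
        proof (cases "w = x")
          case True
          then show ?thesis using diag_lip[of x y] h1(3) dy by simp
        next
          case False
          then show ?thesis using ms_h3[OF w False] M' unfolding okm_def by simp
        qed
      qed
    qed (use M' in \<open>auto simp: okm_def\<close>)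
    then show ?thesis by blast
  qed
qed

lemma close_trans: "close D1 D2 a \<Longrightarrow> close D2 D3 b \<Longrightarrow> close D1 D3 (a + b)"
  unfolding close_def using okm_trans by fastforce

lemma close_mono: "close D1 D2 a \<Longrightarrow> a \<le> b \<Longrightarrow> close D1 D2 b"
  unfolding close_def okm_def by (meson order_trans)

lemma diff_filter_mem: "w \<in># E - filter_mset P E \<Longrightarrow> \<not> P w \<and> w \<in># E"
  by (auto simp: in_diff_count split: if_splits)

context coarse begin

lemma close_coarse:
  assumes c: "\<And>v. v \<in> V \<Longrightarrow> \<bar>f v - g v\<bar> \<le> c"
  shows "close (EDg K f p) (EDg K g p) c"
proof -
  define E where "E = EDg K f p"
  define P where "P = (\<lambda>(b::real, d::real). \<psi> b \<noteq> \<psi> d)"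
  define M where "M = image_mset (\<lambda>x. (x, map_prod \<psi> \<psi> x)) (filter_mset P E)"
  obtain v0 where "v0 \<in> V" using sc_Vne[OF sc ne] unfolding V_def by blast
  then have c0: "0 \<le> c" using c[of v0] by linarith
  have cS: "\<bar>x - \<psi> x\<bar> \<le> c" if xS: "x \<in> S" for x
  proof -
    obtain v where "v \<in> V" "x = f v" using xS unfolding S_def by blast
    then show ?thesis using psi_eq c by simp
  qed
  have ES: "set_mset E \<subseteq> S \<times> S" unfolding E_def S_def V_def by (rule EDg_points[OF sc])
  have fstM: "image_mset fst M = filter_mset P E" unfolding M_def by (simp add: multiset.map_comp comp_def)
  have sndM: "image_mset snd M = EDg K g p"
    unfolding M_def EDg_coarse E_def P_def by (simp add: multiset.map_comp comp_def)
  have "okm E (EDg K g p) M c" unfolding okm_def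
  proof (intro conjI ballI)
    show "image_mset fst M \<subseteq># E" unfolding fstM by simp
    show "image_mset snd M \<subseteq># EDg K g p" unfolding sndM by simp
  next
    fix q assume "q \<in># M"
    then obtain x where x: "x \<in># E" "q = (x, map_prod \<psi> \<psi> x)" unfolding M_def by auto
    obtain b d where bd: "x = (b, d)" by (cases x)
    have "b \<in> S" "d \<in> S" using ES x(1) bd by auto
    then show "linf_dist (fst q) (snd q) \<le> c" using cS[of b] cS[of d] x(2) bd
      unfolding linf_dist_def by (simp add: abs_minus_commute)
  next
    fix w assume "w \<in># E - image_mset fst M"
    then have w: "\<not> P w" "w \<in># E" using diff_filter_mem unfolding fstM by metis+
    obtain b d where bd: "w = (b, d)" by (cases w)
    have "b \<in> S" "d \<in> S" using ES w(2) bd by auto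
    moreover have "\<psi> b = \<psi> d" using w(1) bd unfolding P_def by simp
    ultimately have "\<bar>b - \<psi> b\<bar> \<le> c" "\<bar>d - \<psi> b\<bar> \<le> c" using cS[of b] cS[of d] by auto
    then show "diag_dist w \<le> c" using bd unfolding diag_dist_def by simp
  next
    fix w assume "w \<in># EDg K g p - image_mset snd M"
    then show "diag_dist w \<le> c" unfolding sndM by simp
  qed
  then show ?thesis unfolding close_def E_def using c0 by blast
qed

end

definition hom :: "('v \<Rightarrow> real) \<Rightarrow> ('v \<Rightarrow> real) \<Rightarrow> real \<Rightarrow> 'v \<Rightarrow> real" where
  "hom f g t v = f v + t * (g v - f v)"

definition brk :: "'v set \<Rightarrow> ('v \<Rightarrow> real) \<Rightarrow> ('v \<Rightarrow> real) \<Rightarrow> real set" where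
  "brk V f g = {r. \<exists>u\<in>V. \<exists>v\<in>V. (f u - f v \<noteq> 0 \<or> (g u - g v) - (f u - f v) \<noteq> 0) \<and>
                   (f u - f v) + r * ((g u - g v) - (f u - f v)) = 0}"

lemma brk_finite: assumes "finite V" shows "finite (brk V f g)"
proof -
  have "brk V f g \<subseteq> (\<lambda>(u, v). - (f u - f v) / ((g u - g v) - (f u - f v))) ` (V \<times> V)"
  proof
    fix r assume "r \<in> brk V f g"
    then obtain u v where uv: "u \<in> V" "v \<in> V" "f u - f v \<noteq> 0 \<or> (g u - g v) - (f u - f v) \<noteq> 0"
      "(f u - f v) + r * ((g u - g v) - (f u - f v)) = 0" unfolding brk_def by blast
    then have "(g u - g v) - (f u - f v) \<noteq> 0" by auto
    then have "r = - (f u - f v) / ((g u - g v) - (f u - f v))" using uv(4)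
      by (simp add: field_simps)
    then show "r \<in> (\<lambda>(u, v). - (f u - f v) / ((g u - g v) - (f u - f v))) ` (V \<times> V)"
      using uv by force
  qed
  then show ?thesis using assms by (meson finite_SigmaI finite_imageI finite_subset)
qed

lemma hom_coarse:
  assumes nob: "\<And>l. 0 \<le> l \<Longrightarrow> l < 1 \<Longrightarrow> s + l * (t - s) \<notin> brk V f g"
    and uv: "u \<in> V" "v \<in> V" and le: "hom f g s u \<le> hom f g s v"
  shows "hom f g t u \<le> hom f g t v"
proof (rule ccontr)
  assume "\<not> hom f g t u \<le> hom f g t v"
  define a where "a = f u - f v"
  define b where "b = (g u - g v) - (f u - f v)"
  have ls: "a + s * b \<le> 0" using le unfolding hom_def a_def b_def by (simp add: algebra_simps)
  have lt: "a + t * b > 0" using \<open>\<not> _\<close> unfolding hom_def a_def b_def by (simp add: algebra_simps)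
  define l where "l = - (a + s * b) / ((a + t * b) - (a + s * b))"
  have pos: "(a + t * b) - (a + s * b) > 0" using ls lt by simp
  have l0: "0 \<le> l" unfolding l_def using ls pos by (simp add: divide_nonneg_pos)
  have l1: "l < 1" unfolding l_def using ls lt pos by (simp add: divide_less_eq)
  have root: "a + (s + l * (t - s)) * b = 0"
  proof -
    have "a + (s + l * (t - s)) * b = (a + s * b) + l * ((a + t * b) - (a + s * b))"
      by (simp add: algebra_simps)
    also have "\<dots> = 0"
    proof -
      define D where "D = (a + t * b) - (a + s * b)"
      have "D \<noteq> 0" using pos unfolding D_def by linarith
      then have "l * D = - (a + s * b)" unfolding l_def D_def[symmetric] by simp
      then show ?thesis unfolding D_def by simp
    qed
    finally show ?thesis .
  qed
  have "a \<noteq> 0 \<or> b \<noteq> 0" using lt by auto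
  then have "s + l * (t - s) \<in> brk V f g" unfolding brk_def using uv root
    unfolding a_def b_def by blast
  then show False using nob l0 l1 by blast
qed

lemma hom0: "hom f g 0 = f" unfolding hom_def by auto
lemma hom1: "hom f g 1 = g" unfolding hom_def by auto

context
  fixes K :: "'v set set" and f g :: "'v \<Rightarrow> real" and p :: nat
  assumes sc: "simplicial_complex K" and ne: "K \<noteq> {}"
begin

definition "LL = (SUP v\<in>\<Union>K. \<bar>f v - g v\<bar>)"

lemma LL_ub: "v \<in> \<Union>K \<Longrightarrow> \<bar>f v - g v\<bar> \<le> LL"
  unfolding LL_def using sc_finV[OF sc] by (intro cSUP_upper) auto

lemma LL_nonneg: "0 \<le> LL"
proof -
  obtain v where "v \<in> \<Union>K" using sc_Vne[OF sc ne] by blast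
  then show ?thesis using LL_ub[of v] by linarith
qed

lemma close_refl: "close (EDg K f p) (EDg K f p) 0"
proof -
  interpret coarse K f f using sc ne by unfold_locales auto
  show ?thesis by (rule close_coarse) simp
qed

lemma close_step:
  assumes "0 \<le> t'" "t' < t" and nob: "\<And>r. r \<in> brk (\<Union>K) f g \<Longrightarrow> \<not> (t' < r \<and> r < t)"
  shows "close (EDg K (hom f g t') p) (EDg K (hom f g t) p) ((t - t') * LL)"
proof -
  define m where "m = (t' + t) / 2"
  have m: "t' < m" "m < t" unfolding m_def using assms by auto
  have c1: "hom f g m u \<le> hom f g m v \<Longrightarrow> hom f g t u \<le> hom f g t v" if "u \<in> \<Union>K" "v \<in> \<Union>K" for u v
  proof (rule hom_coarse[OF _ that])
    fix l :: real assume l: "0 \<le> l" "l < 1"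
    have "0 \<le> l * (t - m)" using l m by simp
    moreover have "l * (t - m) < 1 * (t - m)" using l m by (intro mult_strict_right_mono) auto
    ultimately have "m \<le> m + l * (t - m)" "m + l * (t - m) < t" by auto
    then show "m + l * (t - m) \<notin> brk (\<Union>K) f g" using nob m by force
  qed
  have c2: "hom f g m u \<le> hom f g m v \<Longrightarrow> hom f g t' u \<le> hom f g t' v" if "u \<in> \<Union>K" "v \<in> \<Union>K" for u v
  proof (rule hom_coarse[OF _ that])
    fix l :: real assume l: "0 \<le> l" "l < 1"
    have "l * (t' - m) \<le> 0" using l m by (simp add: mult_nonneg_nonpos)
    moreover have "1 * (t' - m) < l * (t' - m)" using l m by (intro mult_strict_right_mono_neg) auto
    ultimately have "m + l * (t' - m) \<le> m" "t' < m + l * (t' - m)" by auto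
    then show "m + l * (t' - m) \<notin> brk (\<Union>K) f g" using nob m by force
  qed
  have d: "\<bar>hom f g a v - hom f g b v\<bar> \<le> \<bar>a - b\<bar> * LL" if "v \<in> \<Union>K" for a b v
  proof -
    have "\<bar>hom f g a v - hom f g b v\<bar> = \<bar>a - b\<bar> * \<bar>f v - g v\<bar>"
      unfolding hom_def by (simp add: algebra_simps abs_mult[symmetric])
    also have "\<dots> \<le> \<bar>a - b\<bar> * LL" using LL_ub[OF that] by (simp add: mult_left_mono)
    finally show ?thesis .
  qed
  have A: "close (EDg K (hom f g m) p) (EDg K (hom f g t) p) ((t - m) * LL)"
  proof -
    interpret coarse K "hom f g m" "hom f g t" using sc ne c1 by unfold_locales auto
    show ?thesis
    proof (rule close_coarse)
      fix v assume "v \<in> V"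
      then have "v \<in> \<Union>K" unfolding V_def .
      moreover have "\<bar>m - t\<bar> = t - m" using m by simp
      ultimately show "\<bar>hom f g m v - hom f g t v\<bar> \<le> (t - m) * LL" using d[of v m t] by simp
    qed
  qed
  have B: "close (EDg K (hom f g m) p) (EDg K (hom f g t') p) ((m - t') * LL)"
  proof -
    interpret coarse K "hom f g m" "hom f g t'" using sc ne c2 by unfold_locales auto
    show ?thesis
    proof (rule close_coarse)
      fix v assume "v \<in> V"
      then have "v \<in> \<Union>K" unfolding V_def .
      moreover have "\<bar>m - t'\<bar> = m - t'" using m by simp
      ultimately show "\<bar>hom f g m v - hom f g t' v\<bar> \<le> (m - t') * LL" using d[of v m t'] by simp
    qed
  qed
  have "close (EDg K (hom f g t') p) (EDg K (hom f g t) p) ((m - t') * LL + (t - m) * LL)"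
    by (rule close_trans[OF close_sym[OF B] A])
  moreover have "(m - t') * LL + (t - m) * LL = (t - t') * LL" by (simp add: algebra_simps)
  ultimately show ?thesis by simp
qed

lemma hom_close_N:
  "\<forall>t. 0 \<le> t \<and> t \<le> 1 \<and> card {r \<in> brk (\<Union>K) f g. 0 < r \<and> r < t} = N \<longrightarrow>
     close (EDg K f p) (EDg K (hom f g t) p) (t * LL)"
proof (induction N rule: less_induct)
  case (less N)
  show ?case
  proof (intro allI impI)
    fix t assume t: "0 \<le> t \<and> t \<le> 1 \<and> card {r \<in> brk (\<Union>K) f g. 0 < r \<and> r < t} = N"
    define A where "A = {r \<in> brk (\<Union>K) f g. 0 < r \<and> r < t}"
    have finA: "finite A" unfolding A_def using brk_finite[OF sc_finV[OF sc]] by simp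
    show "close (EDg K f p) (EDg K (hom f g t) p) (t * LL)"
    proof (cases "t = 0")
      case True
      then show ?thesis unfolding True hom0 using close_refl by simp
    next
      case t0: False
      show ?thesis
      proof (cases "A = {}")
        case True
        have "close (EDg K (hom f g 0) p) (EDg K (hom f g t) p) ((t - 0) * LL)"
          using t t0 True by (intro close_step) (auto simp: A_def)
        then show ?thesis by (simp only: hom0 diff_zero)
      next
        case False
        define t' where "t' = Max A"
        have t'A: "t' \<in> A" unfolding t'_def using finA False by simp
        then have t'b: "0 < t'" "t' < t" unfolding A_def by auto
        have nob: "\<not> (t' < r \<and> r < t)" if "r \<in> brk (\<Union>K) f g" for r
        proof
          assume "t' < r \<and> r < t"
          then have "r \<in> A" unfolding A_def using that t'b by auto
          then have "r \<le> t'" unfolding t'_def using finA by simp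
          then show False using \<open>t' < r \<and> r < t\<close> by simp
        qed
        have sub: "{r \<in> brk (\<Union>K) f g. 0 < r \<and> r < t'} \<subset> A"
          unfolding A_def using t'A t'b unfolding A_def by auto
        have "card {r \<in> brk (\<Union>K) f g. 0 < r \<and> r < t'} < N"
          using psubset_card_mono[OF finA sub] t unfolding A_def by simp
        then have IH: "close (EDg K f p) (EDg K (hom f g t') p) (t' * LL)"
          using less.IH t'b t by auto
        have "close (EDg K (hom f g t') p) (EDg K (hom f g t) p) ((t - t') * LL)"
          using close_step t'b nob by simp
        from close_trans[OF IH this] show ?thesis by (simp add: algebra_simps)
      qed
    qed
  qed
qed

lemma bottleneck_bound: "bottleneck (EDg K f p) (EDg K g p) \<le> LL"
proof -
  have "close (EDg K f p) (EDg K (hom f g 1) p) (1 * LL)"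
    using hom_close_N[of "card {r \<in> brk (\<Union>K) f g. 0 < r \<and> r < 1}", rule_format, of 1] by simp
  then have "close (EDg K f p) (EDg K g p) LL" unfolding hom1 by simp
  then show ?thesis by (rule close_bottleneck)
qed

end

definition kl :: "real multiset \<Rightarrow> nat \<Rightarrow> real" where
  "kl A k = (let xs = rev (sorted_list_of_multiset A) in if 1 \<le> k \<and> k \<le> length xs then xs ! (k - 1) else 0)"
definition ks :: "real multiset \<Rightarrow> nat \<Rightarrow> real" where
  "ks A k = (let xs = sorted_list_of_multiset A in if 1 \<le> k \<and> k \<le> length xs then xs ! (k - 1) else 0)"

lemma cnt_list: "mset xs = A \<Longrightarrow> size (filter_mset P A) = card {i. i < length xs \<and> P (xs ! i)}"
proof -
  assume "mset xs = A"
  then have "filter_mset P A = mset (filter P xs)" by (simp add: mset_filter)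
  then have "size (filter_mset P A) = length (filter P xs)" by (metis size_mset)
  then show ?thesis by (simp add: length_filter_conv_card)
qed

lemma desc_nth:
  assumes "i \<le> j" "j < size A"
  shows "rev (sorted_list_of_multiset A) ! j \<le> rev (sorted_list_of_multiset A) ! i"
proof -
  let ?ys = "sorted_list_of_multiset A"
  have len: "length ?ys = size A" by (metis mset_sorted_list_of_multiset size_mset)
  have "rev ?ys ! j = ?ys ! (length ?ys - Suc j)" "rev ?ys ! i = ?ys ! (length ?ys - Suc i)"
    using assms len by (auto simp: rev_nth)
  moreover have "?ys ! (length ?ys - Suc j) \<le> ?ys ! (length ?ys - Suc i)"
    using assms len by (intro sorted_nth_mono[OF sorted_sorted_list_of_multiset]) auto
  ultimately show ?thesis by simp
qed

lemma asc_nth: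
  assumes "i \<le> j" "j < size A"
  shows "sorted_list_of_multiset A ! i \<le> sorted_list_of_multiset A ! j"
proof -
  have len: "length (sorted_list_of_multiset A) = size A" by (metis mset_sorted_list_of_multiset size_mset)
  show ?thesis using assms len by (intro sorted_nth_mono[OF sorted_sorted_list_of_multiset]) auto
qed

lemma kl_char:
  assumes v: "0 < v" and k: "1 \<le> k"
  shows "v \<le> kl A k \<longleftrightarrow> k \<le> size (filter_mset (\<lambda>a. v \<le> a) A)"
proof -
  define xs where "xs = rev (sorted_list_of_multiset A)"
  have mx: "mset xs = A" unfolding xs_def by simp
  have len: "length xs = size A" using arg_cong[OF mx, of size] by simp
  have cnt: "size (filter_mset (\<lambda>a. v \<le> a) A) = card {i. i < length xs \<and> v \<le> xs ! i}"
    by (rule cnt_list[OF mx])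
  show ?thesis
  proof (cases "k \<le> length xs")
    case True
    have klv: "kl A k = xs ! (k - 1)" unfolding kl_def Let_def xs_def[symmetric] using True k by simp
    show ?thesis
    proof
      assume "v \<le> kl A k"
      then have xv: "v \<le> xs ! (k - 1)" using klv by simp
      have "{0..<k} \<subseteq> {i. i < length xs \<and> v \<le> xs ! i}"
      proof
        fix i assume "i \<in> {0..<k}"
        then have "i \<le> k - 1" "i < length xs" using True by auto
        then have "xs ! (k - 1) \<le> xs ! i" using desc_nth[of i "k - 1" A] True len k unfolding xs_def by simp
        then show "i \<in> {i. i < length xs \<and> v \<le> xs ! i}" using xv \<open>i < length xs\<close> by simp
      qed
      then have "card {0..<k} \<le> card {i. i < length xs \<and> v \<le> xs ! i}" by (intro card_mono) auto
      then show "k \<le> size (filter_mset (\<lambda>a. v \<le> a) A)" using cnt by simp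
    next
      assume h: "k \<le> size (filter_mset (\<lambda>a. v \<le> a) A)"
      show "v \<le> kl A k"
      proof (rule ccontr)
        assume "\<not> v \<le> kl A k"
        then have lt: "xs ! (k - 1) < v" using klv by simp
        have "{i. i < length xs \<and> v \<le> xs ! i} \<subseteq> {0..<k - 1}"
        proof
          fix i assume i: "i \<in> {i. i < length xs \<and> v \<le> xs ! i}"
          show "i \<in> {0..<k - 1}"
          proof (rule ccontr)
            assume "i \<notin> {0..<k - 1}"
            then have "k - 1 \<le> i" by simp
            then have "xs ! i \<le> xs ! (k - 1)" using desc_nth[of "k - 1" i A] i len unfolding xs_def by simp
            then show False using i lt by simp
          qed
        qed
        then have "card {i. i < length xs \<and> v \<le> xs ! i} \<le> card {0..<k - 1}"
          by (intro card_mono) auto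
        then have "card {i. i < length xs \<and> v \<le> xs ! i} \<le> k - 1" by simp
        then show False using h cnt k by simp
      qed
    qed
  next
    case False
    have "kl A k = 0" unfolding kl_def Let_def xs_def[symmetric] using False by simp
    moreover have "size (filter_mset (\<lambda>a. v \<le> a) A) < k"
    proof -
      have "size (filter_mset (\<lambda>a. v \<le> a) A) \<le> size A" by (rule size_filter_mset_lesseq)
      then show ?thesis using len False by linarith
    qed
    ultimately show ?thesis using v by simp
  qed
qed

lemma ks_char:
  assumes v: "v < 0" and k: "1 \<le> k"
  shows "ks A k \<le> v \<longleftrightarrow> k \<le> size (filter_mset (\<lambda>a. a \<le> v) A)"
proof -
  define xs where "xs = sorted_list_of_multiset A"
  have mx: "mset xs = A" unfolding xs_def by simp
  have len: "length xs = size A" using arg_cong[OF mx, of size] by simp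
  have cnt: "size (filter_mset (\<lambda>a. a \<le> v) A) = card {i. i < length xs \<and> xs ! i \<le> v}"
    by (rule cnt_list[OF mx])
  show ?thesis
  proof (cases "k \<le> length xs")
    case True
    have klv: "ks A k = xs ! (k - 1)" unfolding ks_def Let_def xs_def[symmetric] using True k by simp
    show ?thesis
    proof
      assume "ks A k \<le> v"
      then have xv: "xs ! (k - 1) \<le> v" using klv by simp
      have "{0..<k} \<subseteq> {i. i < length xs \<and> xs ! i \<le> v}"
      proof
        fix i assume "i \<in> {0..<k}"
        then have "i \<le> k - 1" "i < length xs" using True by auto
        then have "xs ! i \<le> xs ! (k - 1)" using asc_nth[of i "k - 1" A] True len k unfolding xs_def by simp
        then show "i \<in> {i. i < length xs \<and> xs ! i \<le> v}" using xv \<open>i < length xs\<close> by simp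
      qed
      then have "card {0..<k} \<le> card {i. i < length xs \<and> xs ! i \<le> v}" by (intro card_mono) auto
      then show "k \<le> size (filter_mset (\<lambda>a. a \<le> v) A)" using cnt by simp
    next
      assume h: "k \<le> size (filter_mset (\<lambda>a. a \<le> v) A)"
      show "ks A k \<le> v"
      proof (rule ccontr)
        assume "\<not> ks A k \<le> v"
        then have lt: "v < xs ! (k - 1)" using klv by simp
        have "{i. i < length xs \<and> xs ! i \<le> v} \<subseteq> {0..<k - 1}"
        proof
          fix i assume i: "i \<in> {i. i < length xs \<and> xs ! i \<le> v}"
          show "i \<in> {0..<k - 1}"
          proof (rule ccontr)
            assume "i \<notin> {0..<k - 1}"
            then have "k - 1 \<le> i" by simp
            then have "xs ! (k - 1) \<le> xs ! i" using asc_nth[of "k - 1" i A] i len unfolding xs_def by simp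
            then show False using i lt by simp
          qed
        qed
        then have "card {i. i < length xs \<and> xs ! i \<le> v} \<le> card {0..<k - 1}"
          by (intro card_mono) auto
        then have "card {i. i < length xs \<and> xs ! i \<le> v} \<le> k - 1" by simp
        then show False using h cnt k by simp
      qed
    qed
  next
    case False
    have "ks A k = 0" unfolding ks_def Let_def xs_def[symmetric] using False by simp
    moreover have "size (filter_mset (\<lambda>a. a \<le> v) A) < k"
    proof -
      have "size (filter_mset (\<lambda>a. a \<le> v) A) \<le> size A" by (rule size_filter_mset_lesseq)
      then show ?thesis using len False by linarith
    qed
    ultimately show ?thesis using v by simp
  qed
qed

definition vp :: "(real \<times> real) multiset \<Rightarrow> real \<Rightarrow> real multiset" where
  "vp D t = image_mset (\<lambda>q. tent q t) (filter_mset (\<lambda>(b, d). b < d) D)"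
definition vn :: "(real \<times> real) multiset \<Rightarrow> real \<Rightarrow> real multiset" where
  "vn D t = image_mset (\<lambda>q. tent q t) (filter_mset (\<lambda>(b, d). d < b) D)"

lemma land_pos_kl: "land_pos D k t = kl (vp D t) k"
  unfolding land_pos_def kl_def vp_def by simp
lemma land_neg_ks: "land_neg D k t = ks (vn D t) k"
  unfolding land_neg_def ks_def vn_def by simp

lemma tent_pos0: "b < d \<Longrightarrow> 0 \<le> tent (b, d) t \<and> tent (b, d) t \<le> \<bar>d - b\<bar> / 2"
  unfolding tent_def by (auto simp: max_def min_def)
lemma tent_neg0: "d < b \<Longrightarrow> - (\<bar>d - b\<bar> / 2) \<le> tent (b, d) t \<and> tent (b, d) t \<le> 0"
  unfolding tent_def by (auto simp: max_def min_def)
lemma tent_pos: "fst x < snd x \<Longrightarrow> 0 \<le> tent x t \<and> tent x t \<le> diag_dist x"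
  unfolding diag_dist_def using tent_pos0 by (cases x) simp
lemma tent_neg: "snd x < fst x \<Longrightarrow> - diag_dist x \<le> tent x t \<and> tent x t \<le> 0"
  unfolding diag_dist_def using tent_neg0 by (cases x) simp

lemma tent_lip_pos0: "b < d \<Longrightarrow> b' < d' \<Longrightarrow> \<bar>tent (b, d) t - tent (b', d') t\<bar> \<le> max \<bar>b - b'\<bar> \<bar>d - d'\<bar>"
  unfolding tent_def by (simp; smt (verit))
lemma tent_lip_neg0: "d < b \<Longrightarrow> d' < b' \<Longrightarrow> \<bar>tent (b, d) t - tent (b', d') t\<bar> \<le> max \<bar>b - b'\<bar> \<bar>d - d'\<bar>"
  unfolding tent_def by (simp; smt (verit))
lemma tent_cross_pos0: "b < d \<Longrightarrow> \<not> b' < d' \<Longrightarrow> tent (b, d) t \<le> max \<bar>b - b'\<bar> \<bar>d - d'\<bar>"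
  unfolding tent_def by (simp; smt (verit))
lemma tent_cross_neg0: "d < b \<Longrightarrow> \<not> d' < b' \<Longrightarrow> - tent (b, d) t \<le> max \<bar>b - b'\<bar> \<bar>d - d'\<bar>"
  unfolding tent_def by (simp; smt (verit))

lemma tent_lip_pos: "fst x < snd x \<Longrightarrow> fst y < snd y \<Longrightarrow> \<bar>tent x t - tent y t\<bar> \<le> linf_dist x y"
  unfolding linf_dist_def using tent_lip_pos0 by (cases x, cases y) simp
lemma tent_lip_neg: "snd x < fst x \<Longrightarrow> snd y < fst y \<Longrightarrow> \<bar>tent x t - tent y t\<bar> \<le> linf_dist x y"
  unfolding linf_dist_def using tent_lip_neg0 by (cases x, cases y) simp
lemma tent_cross_pos: "fst x < snd x \<Longrightarrow> \<not> fst y < snd y \<Longrightarrow> tent x t \<le> linf_dist x y"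
  unfolding linf_dist_def using tent_cross_pos0 by (cases x, cases y) simp
lemma tent_cross_neg: "snd x < fst x \<Longrightarrow> \<not> snd y < fst y \<Longrightarrow> - tent x t \<le> linf_dist x y"
  unfolding linf_dist_def using tent_cross_neg0 by (cases x, cases y) simp

lemma filter_mono2: assumes "\<And>x. x \<in># M \<Longrightarrow> P x \<Longrightarrow> Q x" shows "filter_mset P M \<subseteq># filter_mset Q M"
  unfolding subseteq_mset_def
proof
  fix x show "count (filter_mset P M) x \<le> count (filter_mset Q M) x"
  proof (cases "x \<in># M")
    case True then show ?thesis using assms by simp
  next
    case False then show ?thesis by (simp add: not_in_iff)
  qed
qed

lemma count_transfer:
  assumes "image_mset fst M \<subseteq># D1" "image_mset snd M \<subseteq># D2"
    and "\<And>p. p \<in># M \<Longrightarrow> Q1 (fst p) \<Longrightarrow> Q2 (snd p)"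
    and "\<And>x. x \<in># D1 - image_mset fst M \<Longrightarrow> \<not> Q1 x"
  shows "size (filter_mset Q1 D1) \<le> size (filter_mset Q2 D2)"
proof -
  have "D1 = image_mset fst M + (D1 - image_mset fst M)" using assms(1) by simp
  then have "filter_mset Q1 D1 = filter_mset Q1 (image_mset fst M) + filter_mset Q1 (D1 - image_mset fst M)"
    by (metis filter_union_mset)
  moreover have "filter_mset Q1 (D1 - image_mset fst M) = {#}"
  proof (rule multiset_eqI)
    fix x
    show "count (filter_mset Q1 (D1 - image_mset fst M)) x = count {#} x"
    proof (cases "x \<in># D1 - image_mset fst M")
      case True then show ?thesis using assms(4) by simp
    next
      case False then show ?thesis by (simp add: not_in_iff)
    qed
  qed
  ultimately have "size (filter_mset Q1 D1) = size (filter_mset (\<lambda>p. Q1 (fst p)) M)"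
    by (simp add: filter_mset_image_mset)
  also have "\<dots> \<le> size (filter_mset (\<lambda>p. Q2 (snd p)) M)"
    using assms(3) by (intro size_mset_mono filter_mono2) auto
  also have "\<dots> = size (filter_mset Q2 (image_mset snd M))"
    by (simp add: filter_mset_image_mset)
  also have "\<dots> \<le> size (filter_mset Q2 D2)"
    using assms(2) by (intro size_mset_mono multiset_filter_mono)
  finally show ?thesis .
qed

lemma size_vp: "size (filter_mset P (vp D t)) = size (filter_mset (\<lambda>q. fst q < snd q \<and> P (tent q t)) D)"
  unfolding vp_def filter_mset_image_mset filter_filter_mset by (simp add: case_prod_beta)
lemma size_vn: "size (filter_mset P (vn D t)) = size (filter_mset (\<lambda>q. snd q < fst q \<and> P (tent q t)) D)"
  unfolding vn_def filter_mset_image_mset filter_filter_mset by (simp add: case_prod_beta)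

lemma vp_count:
  assumes M: "is_partial_matching D1 D2 M" and c: "matching_cost D1 D2 M \<le> c" and a: "c < a"
  shows "size (filter_mset (\<lambda>v. a \<le> v) (vp D1 t)) \<le> size (filter_mset (\<lambda>v. a - c \<le> v) (vp D2 t))"
proof -
  have cc: "0 \<le> c" "\<forall>p\<in>#M. linf_dist (fst p) (snd p) \<le> c" "\<forall>x\<in>#D1 - image_mset fst M. diag_dist x \<le> c"
    using c unfolding cost_le_iff by auto
  show ?thesis unfolding size_vp
  proof (rule count_transfer)
    show "image_mset fst M \<subseteq># D1" "image_mset snd M \<subseteq># D2" using M unfolding is_partial_matching_def by auto
  next
    fix p assume p: "p \<in># M" "fst (fst p) < snd (fst p) \<and> a \<le> tent (fst p) t"
    have l: "linf_dist (fst p) (snd p) \<le> c" using cc p by simp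
    show "fst (snd p) < snd (snd p) \<and> a - c \<le> tent (snd p) t"
    proof (cases "fst (snd p) < snd (snd p)")
      case True
      then show ?thesis using tent_lip_pos[of "fst p" "snd p" t] p l by (auto simp: abs_le_iff)
    next
      case False
      then show ?thesis using tent_cross_pos[of "fst p" "snd p" t] p l a by simp
    qed
  next
    fix x assume "x \<in># D1 - image_mset fst M"
    then have "diag_dist x \<le> c" using cc by simp
    then show "\<not> (fst x < snd x \<and> a \<le> tent x t)" using tent_pos[of x t] a by auto
  qed
qed

lemma vn_count:
  assumes M: "is_partial_matching D1 D2 M" and c: "matching_cost D1 D2 M \<le> c" and a: "a < - c"
  shows "size (filter_mset (\<lambda>v. v \<le> a) (vn D1 t)) \<le> size (filter_mset (\<lambda>v. v \<le> a + c) (vn D2 t))"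
proof -
  have cc: "0 \<le> c" "\<forall>p\<in>#M. linf_dist (fst p) (snd p) \<le> c" "\<forall>x\<in>#D1 - image_mset fst M. diag_dist x \<le> c"
    using c unfolding cost_le_iff by auto
  show ?thesis unfolding size_vn
  proof (rule count_transfer)
    show "image_mset fst M \<subseteq># D1" "image_mset snd M \<subseteq># D2" using M unfolding is_partial_matching_def by auto
  next
    fix p assume p: "p \<in># M" "snd (fst p) < fst (fst p) \<and> tent (fst p) t \<le> a"
    have l: "linf_dist (fst p) (snd p) \<le> c" using cc p by simp
    show "snd (snd p) < fst (snd p) \<and> tent (snd p) t \<le> a + c"
    proof (cases "snd (snd p) < fst (snd p)")
      case True
      then show ?thesis using tent_lip_neg[of "fst p" "snd p" t] p l by (auto simp: abs_le_iff)
    next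
      case False
      then show ?thesis using tent_cross_neg[of "fst p" "snd p" t] p l a by simp
    qed
  next
    fix x assume "x \<in># D1 - image_mset fst M"
    then have "diag_dist x \<le> c" using cc by simp
    then show "\<not> (snd x < fst x \<and> tent x t \<le> a)" using tent_neg[of x t] a by auto
  qed
qed

lemma kl_nonneg: "(\<And>a. a \<in># A \<Longrightarrow> 0 \<le> a) \<Longrightarrow> 0 \<le> kl A k"
proof -
  assume h: "\<And>a. a \<in># A \<Longrightarrow> 0 \<le> a"
  define xs where "xs = rev (sorted_list_of_multiset A)"
  have st: "set xs = set_mset A" unfolding xs_def by simp
  show ?thesis
  proof (cases "1 \<le> k \<and> k \<le> length xs")
    case True
    then have "xs ! (k - 1) \<in> set xs" by (intro nth_mem) auto
    then show ?thesis unfolding kl_def Let_def xs_def[symmetric] using True h st by simp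
  next
    case False then show ?thesis unfolding kl_def Let_def xs_def[symmetric] using False by auto
  qed
qed

lemma ks_nonpos: "(\<And>a. a \<in># A \<Longrightarrow> a \<le> 0) \<Longrightarrow> ks A k \<le> 0"
proof -
  assume h: "\<And>a. a \<in># A \<Longrightarrow> a \<le> 0"
  define xs where "xs = sorted_list_of_multiset A"
  have st: "set xs = set_mset A" unfolding xs_def by simp
  show ?thesis
  proof (cases "1 \<le> k \<and> k \<le> length xs")
    case True
    then have "xs ! (k - 1) \<in> set xs" by (intro nth_mem) auto
    then show ?thesis unfolding ks_def Let_def xs_def[symmetric] using True h st by simp
  next
    case False then show ?thesis unfolding ks_def Let_def xs_def[symmetric] using False by auto
  qed
qed

lemma kl_half:
  assumes A: "\<And>a. a \<in># A \<Longrightarrow> 0 \<le> a" and B: "\<And>a. a \<in># B \<Longrightarrow> 0 \<le> a" and c: "0 \<le> c"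
    and cnt: "\<And>a. c < a \<Longrightarrow> size (filter_mset (\<lambda>v. a \<le> v) A) \<le> size (filter_mset (\<lambda>v. a - c \<le> v) B)"
    and k: "1 \<le> k"
  shows "kl A k - c \<le> kl B k"
proof (cases "kl A k \<le> c")
  case True
  have "0 \<le> kl B k" by (rule kl_nonneg) (rule B)
  then show ?thesis using True by simp
next
  case False
  define a where "a = kl A k"
  have "k \<le> size (filter_mset (\<lambda>v. a \<le> v) A)" using kl_char[of a k A] False c k unfolding a_def by simp
  also have "\<dots> \<le> size (filter_mset (\<lambda>v. a - c \<le> v) B)" using cnt False unfolding a_def by simp
  finally have "a - c \<le> kl B k" using kl_char[of "a - c" k B] False k unfolding a_def by simp
  then show ?thesis unfolding a_def .
qed

lemma ks_half:
  assumes A: "\<And>a. a \<in># A \<Longrightarrow> a \<le> 0" and B: "\<And>a. a \<in># B \<Longrightarrow> a \<le> 0" and c: "0 \<le> c"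
    and cnt: "\<And>a. a < - c \<Longrightarrow> size (filter_mset (\<lambda>v. v \<le> a) A) \<le> size (filter_mset (\<lambda>v. v \<le> a + c) B)"
    and k: "1 \<le> k"
  shows "ks B k \<le> ks A k + c"
proof (cases "- c \<le> ks A k")
  case True
  have "ks B k \<le> 0" by (rule ks_nonpos) (rule B)
  then show ?thesis using True by simp
next
  case False
  define a where "a = ks A k"
  have "k \<le> size (filter_mset (\<lambda>v. v \<le> a) A)" using ks_char[of a k A] False c k unfolding a_def by simp
  also have "\<dots> \<le> size (filter_mset (\<lambda>v. v \<le> a + c) B)" using cnt False unfolding a_def by simp
  finally have "ks B k \<le> a + c" using ks_char[of "a + c" k B] False k unfolding a_def by simp
  then show ?thesis unfolding a_def .
qed

lemma vp_nonneg: "a \<in># vp D t \<Longrightarrow> 0 \<le> a"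
  unfolding vp_def using tent_pos by (auto simp: case_prod_beta)
lemma vn_nonpos: "a \<in># vn D t \<Longrightarrow> a \<le> 0"
  unfolding vn_def using tent_neg by (auto simp: case_prod_beta)

lemma swap_matching:
  assumes "is_partial_matching D1 D2 M" "matching_cost D1 D2 M \<le> c"
  shows "is_partial_matching D2 D1 (image_mset prod.swap M) \<and> matching_cost D2 D1 (image_mset prod.swap M) \<le> c"
  using assms unfolding is_partial_matching_def cost_le_iff
  by (auto simp: multiset.map_comp comp_def linf_sym)

lemma land_le_cost:
  assumes M: "is_partial_matching D1 D2 M"
  shows "landscape_dist_inf D1 D2 \<le> matching_cost D1 D2 M"
proof -
  define c where "c = matching_cost D1 D2 M"
  have c0: "0 \<le> c" unfolding c_def by (rule cost_nonneg)
  have Mc: "matching_cost D1 D2 M \<le> c" unfolding c_def by simp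
  have M': "is_partial_matching D2 D1 (image_mset prod.swap M)" "matching_cost D2 D1 (image_mset prod.swap M) \<le> c"
    using swap_matching[OF M Mc] by auto
  have pos: "\<bar>land_pos D1 k t - land_pos D2 k t\<bar> \<le> c" if k: "1 \<le> k" for k t
  proof -
    have "kl (vp D1 t) k - c \<le> kl (vp D2 t) k"
      by (rule kl_half[OF vp_nonneg vp_nonneg c0 vp_count[OF M Mc] k])
    moreover have "kl (vp D2 t) k - c \<le> kl (vp D1 t) k"
      by (rule kl_half[OF vp_nonneg vp_nonneg c0 vp_count[OF M'] k])
    ultimately show ?thesis unfolding land_pos_kl by simp
  qed
  have neg: "\<bar>land_neg D1 k t - land_neg D2 k t\<bar> \<le> c" if k: "1 \<le> k" for k t
  proof -
    have "ks (vn D2 t) k \<le> ks (vn D1 t) k + c"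
      by (rule ks_half[OF vn_nonpos vn_nonpos c0 vn_count[OF M Mc] k])
    moreover have "ks (vn D1 t) k \<le> ks (vn D2 t) k + c"
      by (rule ks_half[OF vn_nonpos vn_nonpos c0 vn_count[OF M'] k])
    ultimately show ?thesis unfolding land_neg_ks by simp
  qed
  have "Sup ({\<bar>land_pos D1 k t - land_pos D2 k t\<bar> | k t. 1 \<le> k} \<union>
          {\<bar>land_neg D1 j t - land_neg D2 j t\<bar> | j t. 1 \<le> j}) \<le> c"
    by (rule cSup_least) (use pos neg in auto)
  then show ?thesis unfolding landscape_dist_inf_def c_def .
qed

lemma land_le_bottleneck: "landscape_dist_inf D1 D2 \<le> bottleneck D1 D2"
  unfolding bottleneck_def
proof (rule cInf_greatest)
  have "is_partial_matching D1 D2 {#}" unfolding is_partial_matching_def by simp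
  then show "{matching_cost D1 D2 M |M. is_partial_matching D1 D2 M} \<noteq> {}" by blast
qed (auto intro: land_le_cost)

theorem proposition0p3:
  fixes K :: "'v set set" and f g :: "'v \<Rightarrow> real" and p :: nat
  assumes "simplicial_complex K" and "K \<noteq> {}"
  shows "landscape_dist_inf (EDg K f p) (EDg K g p) \<le> bottleneck (EDg K f p) (EDg K g p)
       \<and> bottleneck (EDg K f p) (EDg K g p) \<le> (SUP v\<in>\<Union>K. \<bar>f v - g v\<bar>)"
proof
  show "landscape_dist_inf (EDg K f p) (EDg K g p) \<le> bottleneck (EDg K f p) (EDg K g p)"
    by (rule land_le_bottleneck)
  show "bottleneck (EDg K f p) (EDg K g p) \<le> (SUP v\<in>\<Union>K. \<bar>f v - g v\<bar>)"
    using bottleneck_bound[OF assms, of f p g] unfolding LL_def[OF assms] .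
qed

end
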